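(* Let $\rho\colon\mathrm{Isom}(\mathbf H^1_{\mathbb C})_o\to\mathrm{Isom}(\mathbf H^\infty_{\mathbb C})_o$ be a non-elementary representation with $\ell(\rho)=2$. Then $b\mapsto c(b)$ is a non-trivial $\mathbb R$-linear map $\mathbb R\to E$, and $\mathrm{Im}\,K(b)=0$ for every $b\in\mathbb R$.
   Context: $\mathcal H$: separable complex Hilbert space with strongly non-degenerate Hermitian form $B$ (linear in the first variable) of signature $(1,\infty)$; $\mathbf H^\infty_{\mathbb C}=\{[v]:B(v,v)>0\}$, $\cosh d([v],[w])=|B(v,w)|/\sqrt{B(v,v)B(w,w)}$, boundary = isotropic lines, $\mathrm{Isom}(\mathbf H^\infty_{\mathbb C})_o=PU(B)$. $\mathbf H^1_{\mathbb C}$: $\mathbb C^2$ with $B(z,w)=z_1\bar w_1-z_2\bar w_2$, $\xi_1=(e_1+e_2)/\sqrt2$, $\xi_2=(e_1-e_2)/\sqrt2$; $g(\lambda,b)\in SU(1,1)$ has matrix $\begin{pmatrix}\lambda&ib\\0&\lambda^{-1}\end{pmatrix}$ in basis $(\xi_1,\xi_2)$. Representations are orbitally continuous homomorphisms; non-elementary = no fixed point in $\mathbf H^\infty_{\mathbb C}\cup\partial\mathbf H^\infty_{\mathbb C}$ and no invariant pair of boundary points. For such $\rho$: $\eta_1$ is the unique common fixed boundary point of the $\rho(g(\lambda,b))$, $\eta_2$ the other endpoint of the common axis of the hyperbolic $\rho(g(\lambda,0))$, $\lambda\neq1$; isotropic representatives with $B(\eta_1,\eta_2)=1$; $E=\eta_1^\perp\cap\eta_2^\perp$.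 The lift $T_b\in U(B)$ of $\rho(g(1,b))$ with $T_b\eta_1=\eta_1$ satisfies $T_b\eta_2=K(b)\eta_1+\eta_2+c(b)$ with $K(b)\in\mathbb C$, $c(b)\in E$ (the paper writes $\Delta(b)=\mathrm{Im}K(b)$). $\ell(\rho)$ is the $t>0$ with $\inf_xd(\rho(g(\lambda,0))x,x)=t|\ln\lambda|$ for all $\lambda>0$. *)

theory Defs
  imports "HOL-Analysis.Analysis"
begin

text \<open>Every separable complex Hilbert space with a strongly non-degenerate Hermitian
form of signature (1,infinity) is isometric to the following standard model:
vectors are square-summable sequences nat => complex, coordinate 0 is the positive
direction and B(v,w) = v_0 conj(w_0) - sum_{n>=1} v_n conj(w_n).\<close>

type_synonym vec = "nat \<Rightarrow> complex"

definition l2 :: "vec set" where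
  "l2 = {v. summable (\<lambda>n. (cmod (v n))\<^sup>2)}"

definition l2normsq :: "vec \<Rightarrow> real" where
  "l2normsq v = (\<Sum>n. (cmod (v n))\<^sup>2)"

definition Bf :: "vec \<Rightarrow> vec \<Rightarrow> complex" where
  "Bf v w = v 0 * cnj (w 0) - (\<Sum>n. v (Suc n) * cnj (w (Suc n)))"

definition vzero :: vec where "vzero = (\<lambda>n. 0)"

definition vadd :: "vec \<Rightarrow> vec \<Rightarrow> vec" where "vadd v w = (\<lambda>n. v n + w n)"

definition vscale :: "complex \<Rightarrow> vec \<Rightarrow> vec" where "vscale a v = (\<lambda>n. a * v n)"

definition UB :: "(vec \<Rightarrow> vec) set" where
  "UB = {T. bij_betw T l2 l2
          \<and> (\<forall>v\<in>l2. \<forall>w\<in>l2. T (vadd v w) = vadd (T v) (T w))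
          \<and> (\<forall>a. \<forall>v\<in>l2. T (vscale a v) = vscale a (T v))
          \<and> (\<exists>C. \<forall>v\<in>l2. l2normsq (T v) \<le> C * l2normsq v)
          \<and> (\<forall>v\<in>l2. \<forall>w\<in>l2. Bf (T v) (T w) = Bf v w)}"

text \<open>Equality in PU(B) = U(B)/U(1): operators differing by a unit scalar.\<close>
definition proj_eq :: "(vec \<Rightarrow> vec) \<Rightarrow> (vec \<Rightarrow> vec) \<Rightarrow> bool" where
  "proj_eq T S \<longleftrightarrow> (\<exists>u. cmod u = 1 \<and> (\<forall>v\<in>l2. T v = vscale u (S v)))"

definition hyp_pt :: "vec \<Rightarrow> bool" where
  "hyp_pt v \<longleftrightarrow> v \<in> l2 \<and> Re (Bf v v) > 0"

definition isotropic :: "vec \<Rightarrow> bool" where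
  "isotropic v \<longleftrightarrow> v \<in> l2 \<and> v \<noteq> vzero \<and> Bf v v = 0"

definition same_line :: "vec \<Rightarrow> vec \<Rightarrow> bool" where
  "same_line v w \<longleftrightarrow> (\<exists>\<mu>. w = vscale \<mu> v)"

definition hdist :: "vec \<Rightarrow> vec \<Rightarrow> real" where
  "hdist v w = arcosh (cmod (Bf v w) / sqrt (Re (Bf v v) * Re (Bf w w)))"

definition B2 :: "complex^2 \<Rightarrow> complex^2 \<Rightarrow> complex" where
  "B2 z w = z$1 * cnj (w$1) - z$2 * cnj (w$2)"

definition SU11 :: "(complex^2^2) set" where
  "SU11 = {M. det M = 1 \<and> (\<forall>z w. B2 (M *v z) (M *v w) = B2 z w)}"

text \<open>Change of basis matrix whose columns are xi1 = (e1+e2)/sqrt 2, xi2 = (e1-e2)/sqrt 2.\<close>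
definition Pxi :: "complex^2^2" where
  "Pxi = (\<chi> i j. if i = 2 \<and> j = 2 then - complex_of_real (1 / sqrt 2)
                 else complex_of_real (1 / sqrt 2))"

definition gmat :: "real \<Rightarrow> real \<Rightarrow> complex^2^2" where
  "gmat l b = Pxi ** (\<chi> i j. if i = 1 \<and> j = 1 then complex_of_real l
                          else if i = 1 \<and> j = 2 then \<i> * complex_of_real b
                          else if i = 2 \<and> j = 2 then complex_of_real (1 / l)
                          else 0) ** matrix_inv Pxi"

text \<open>A representation of Isom(H^1_C)_o = PU(1,1) = SU(1,1)/{+-1} into
Isom(H^infty_C)_o = PU(B) is given by choosing, for every g in SU(1,1), a lift
rho g in U(B) of its image; it must be multiplicative modulo unit scalars, kill -1
modulo scalars, and be orbitally continuous.\<close>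
definition representation :: "(complex^2^2 \<Rightarrow> vec \<Rightarrow> vec) \<Rightarrow> bool" where
  "representation rho \<longleftrightarrow>
     (\<forall>g\<in>SU11. rho g \<in> UB)
   \<and> (\<forall>g\<in>SU11. \<forall>h\<in>SU11. proj_eq (rho (g ** h)) (rho g \<circ> rho h))
   \<and> proj_eq (rho (- mat 1)) id
   \<and> (\<forall>x. hyp_pt x \<longrightarrow> (\<forall>g\<in>SU11. \<forall>e>0. \<exists>d>0. \<forall>h\<in>SU11.
          dist h g < d \<longrightarrow> hdist (rho h x) (rho g x) < e))"

definition non_elementary :: "(complex^2^2 \<Rightarrow> vec \<Rightarrow> vec) \<Rightarrow> bool" where
  "non_elementary rho \<longleftrightarrow>
     \<not> (\<exists>v. v \<in> l2 \<and> v \<noteq> vzero \<and> Re (Bf v v) \<ge> 0 \<and>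
            (\<forall>g\<in>SU11. same_line v (rho g v)))
   \<and> \<not> (\<exists>p q. isotropic p \<and> isotropic q \<and> \<not> same_line p q \<and>
            (\<forall>g\<in>SU11. (same_line p (rho g p) \<and> same_line q (rho g q))
                     \<or> (same_line q (rho g p) \<and> same_line p (rho g q))))"

definition min_disp :: "(complex^2^2 \<Rightarrow> vec \<Rightarrow> vec) \<Rightarrow> real \<Rightarrow> real" where
  "min_disp rho l = Inf ((\<lambda>x. hdist (rho (gmat l 0) x) x) ` {x. hyp_pt x})"

definition has_ell :: "(complex^2^2 \<Rightarrow> vec \<Rightarrow> vec) \<Rightarrow> real \<Rightarrow> bool" where
  "has_ell rho t \<longleftrightarrow> t > 0 \<and> (\<forall>l>0. min_disp rho l = t * \<bar>ln l\<bar>)"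

end

theory Submission
  imports Defs
begin


lemma vadd_apply[simp]: "vadd v w n = v n + w n" by (simp add: vadd_def)
lemma vscale_apply[simp]: "vscale a v n = a * v n" by (simp add: vscale_def)
lemma vzero_apply[simp]: "vzero n = 0" by (simp add: vzero_def)

lemma l2_add[intro]: assumes "v \<in> l2" "w \<in> l2" shows "vadd v w \<in> l2"
proof -
  have s: "summable (\<lambda>n. 2*(cmod (v n))\<^sup>2 + 2*(cmod (w n))\<^sup>2)"
    using assms by (auto simp: l2_def intro!: summable_add summable_mult)
  have "norm ((cmod (vadd v w n))\<^sup>2) \<le> 2*(cmod (v n))\<^sup>2 + 2*(cmod (w n))\<^sup>2" for n
  proof -
    have "cmod (v n + w n) \<le> cmod (v n) + cmod (w n)" by (rule norm_triangle_ineq)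
    hence "(cmod (v n + w n))\<^sup>2 \<le> (cmod (v n) + cmod (w n))\<^sup>2"
      by (simp add: power_mono)
    also have "\<dots> \<le> 2*(cmod (v n))\<^sup>2 + 2*(cmod (w n))\<^sup>2"
      using zero_le_power2[of "cmod (v n) - cmod (w n)"] unfolding power2_sum power2_diff by linarith
    finally show ?thesis by simp
  qed
  then show ?thesis unfolding l2_def by (auto intro: summable_comparison_test'[OF s])
qed

lemma l2_scale[intro]: assumes "v \<in> l2" shows "vscale a v \<in> l2"
proof -
  have e: "(cmod (vscale a v n))\<^sup>2 = (cmod a)\<^sup>2 * (cmod (v n))\<^sup>2" for n
    by (simp add: norm_mult power_mult_distrib)
  show ?thesis using assms unfolding l2_def mem_Collect_eq e by (rule summable_mult)
qed

lemma l2_zero[intro]: "vzero \<in> l2" by (simp add: l2_def)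

lemma summable_prod:
  assumes "v \<in> l2" "w \<in> l2" shows "summable (\<lambda>n. v n * cnj (w n))"
proof -
  have s: "summable (\<lambda>n. (cmod (v n))\<^sup>2 + (cmod (w n))\<^sup>2)"
    using assms by (auto simp: l2_def intro!: summable_add)
  have *: "norm (v n * cnj (w n)) \<le> (cmod (v n))\<^sup>2 + (cmod (w n))\<^sup>2" for n
  proof -
    have "norm (v n * cnj (w n)) = cmod (v n) * cmod (w n)" by (simp add: norm_mult)
    also have "\<dots> \<le> (cmod (v n))\<^sup>2 + (cmod (w n))\<^sup>2"
      using zero_le_power2[of "cmod (v n) - cmod (w n)"] unfolding power2_diff
      using mult_nonneg_nonneg[OF norm_ge_zero norm_ge_zero, of "v n" "w n"] by linarith
    finally show ?thesis .
  qed
  show ?thesis by (rule summable_comparison_test'[OF s, of 0]) (rule *)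
qed

lemma summable_prodS:
  assumes "v \<in> l2" "w \<in> l2" shows "summable (\<lambda>n. v (Suc n) * cnj (w (Suc n)))"
proof -
  have e: "summable (\<lambda>n. v (Suc n) * cnj (w (Suc n))) = summable (\<lambda>n. v n * cnj (w n))"
    by (rule summable_Suc_iff)
  show ?thesis unfolding e by (rule summable_prod[OF assms])
qed

lemma Bf_add_left: assumes "u \<in> l2" "v \<in> l2" "w \<in> l2"
  shows "Bf (vadd u v) w = Bf u w + Bf v w"
proof -
  have "(\<Sum>n. (u (Suc n) + v (Suc n)) * cnj (w (Suc n))) =
        (\<Sum>n. u (Suc n) * cnj (w (Suc n))) + (\<Sum>n. v (Suc n) * cnj (w (Suc n)))"
    using suminf_add[OF summable_prodS[OF assms(1,3)] summable_prodS[OF assms(2,3)]]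
    by (simp add: distrib_right)
  then show ?thesis by (simp add: Bf_def distrib_right)
qed

lemma Bf_scale_left: assumes "u \<in> l2" "w \<in> l2"
  shows "Bf (vscale a u) w = a * Bf u w"
proof -
  have "(\<Sum>n. a * u (Suc n) * cnj (w (Suc n))) = a * (\<Sum>n. u (Suc n) * cnj (w (Suc n)))"
    using suminf_mult[OF summable_prodS[OF assms], of a] by (simp add: mult.assoc)
  then show ?thesis by (simp add: Bf_def algebra_simps)
qed

lemma Bf_cnj: assumes "v \<in> l2" "w \<in> l2" shows "cnj (Bf v w) = Bf w v"
proof -
  have "(\<lambda>n. v (Suc n) * cnj (w (Suc n))) sums (\<Sum>n. v (Suc n) * cnj (w (Suc n)))"
    using summable_prodS[OF assms] by (simp add: summable_sums)
  hence "(\<lambda>n. cnj (v (Suc n) * cnj (w (Suc n)))) sums cnj (\<Sum>n. v (Suc n) * cnj (w (Suc n)))"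
    by (rule iffD2[OF sums_cnj])
  hence "(\<lambda>n. w (Suc n) * cnj (v (Suc n))) sums cnj (\<Sum>n. v (Suc n) * cnj (w (Suc n)))"
    by (simp add: mult.commute)
  hence "(\<Sum>n. w (Suc n) * cnj (v (Suc n))) = cnj (\<Sum>n. v (Suc n) * cnj (w (Suc n)))"
    by (simp add: sums_iff)
  then show ?thesis by (simp add: Bf_def mult.commute)
qed

lemma Bf_add_right: assumes "u \<in> l2" "v \<in> l2" "w \<in> l2"
  shows "Bf w (vadd u v) = Bf w u + Bf w v"
proof -
  have "Bf w (vadd u v) = cnj (Bf (vadd u v) w)" using assms by (simp add: Bf_cnj l2_add)
  also have "\<dots> = cnj (Bf u w) + cnj (Bf v w)" using assms by (simp add: Bf_add_left)
  finally show ?thesis using assms by (simp add: Bf_cnj)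
qed

lemma Bf_scale_right: assumes "u \<in> l2" "w \<in> l2"
  shows "Bf w (vscale a u) = cnj a * Bf w u"
proof -
  have "Bf w (vscale a u) = cnj (Bf (vscale a u) w)" using assms by (simp add: Bf_cnj l2_scale)
  also have "\<dots> = cnj a * cnj (Bf u w)" using assms by (simp add: Bf_scale_left)
  finally show ?thesis using assms by (simp add: Bf_cnj)
qed

lemma Bf_self_real: assumes "v \<in> l2" shows "Bf v v = of_real (Re (Bf v v))"
proof -
  have "Im (cnj (Bf v v)) = Im (Bf v v)" using Bf_cnj[OF assms assms] by simp
  then have "Im (Bf v v) = 0" by simp
  then show ?thesis by (simp add: complex_eq_iff)
qed

lemma Bf_zero_left[simp]: "Bf vzero w = 0" by (simp add: Bf_def)
lemma Bf_zero_right[simp]: "Bf w vzero = 0" by (simp add: Bf_def)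

lemma Bf_self_le: assumes "v \<in> l2" shows "Re (Bf v v) \<le> (cmod (v 0))\<^sup>2"
    and "Re (Bf v v) = (cmod (v 0))\<^sup>2 - (\<Sum>n. (cmod (v (Suc n)))\<^sup>2)"
proof -
  have sm: "summable (\<lambda>n. (cmod (v (Suc n)))\<^sup>2)"
  proof -
    have e: "summable (\<lambda>n. (cmod (v (Suc n)))\<^sup>2) = summable (\<lambda>n. (cmod (v n))\<^sup>2)"
      by (rule summable_Suc_iff)
    show ?thesis unfolding e using assms(1) by (simp add: l2_def)
  qed
  have e: "v n * cnj (v n) = of_real ((cmod (v n))\<^sup>2)" for n
    using complex_norm_square[of "v n"] by simp
  have "(\<Sum>n. v (Suc n) * cnj (v (Suc n))) = of_real (\<Sum>n. (cmod (v (Suc n)))\<^sup>2)"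
    by (simp add: e suminf_of_real[OF sm])
  then show eq: "Re (Bf v v) = (cmod (v 0))\<^sup>2 - (\<Sum>n. (cmod (v (Suc n)))\<^sup>2)"
    by (simp add: Bf_def e)
  have "0 \<le> (\<Sum>n. (cmod (v (Suc n)))\<^sup>2)" by (rule suminf_nonneg[OF sm]) simp
  then show "Re (Bf v v) \<le> (cmod (v 0))\<^sup>2" using eq by simp
qed

lemma Bf_self_zero0: assumes "v \<in> l2" "v 0 = 0" "Re (Bf v v) \<ge> 0" shows "v = vzero"
proof -
  have sm: "summable (\<lambda>n. (cmod (v (Suc n)))\<^sup>2)"
  proof -
    have e: "summable (\<lambda>n. (cmod (v (Suc n)))\<^sup>2) = summable (\<lambda>n. (cmod (v n))\<^sup>2)"
      by (rule summable_Suc_iff)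
    show ?thesis unfolding e using assms(1) by (simp add: l2_def)
  qed
  have "(\<Sum>n. (cmod (v (Suc n)))\<^sup>2) \<le> 0" using Bf_self_le(2)[OF assms(1)] assms by simp
  hence "(\<Sum>n. (cmod (v (Suc n)))\<^sup>2) = 0" using suminf_nonneg[OF sm] by force
  hence "\<forall>n. (cmod (v (Suc n)))\<^sup>2 = 0" using suminf_eq_zero_iff[OF sm] by simp
  hence "v (Suc n) = 0" for n by simp
  then show ?thesis using assms(2) by (auto simp: vzero_def fun_eq_iff) (metis not0_implies_Suc)
qed




locale frame =
  fixes e1 e2 :: vec
  assumes iso1: "isotropic e1" and iso2: "isotropic e2" and n12: "Bf e1 e2 = 1"
begin

lemma e1l2[simp]: "e1 \<in> l2" and e2l2[simp]: "e2 \<in> l2"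
  using iso1 iso2 by (auto simp: isotropic_def)
lemma B11[simp]: "Bf e1 e1 = 0" and B22[simp]: "Bf e2 e2 = 0"
  using iso1 iso2 by (auto simp: isotropic_def)
lemma B12[simp]: "Bf e1 e2 = 1" using n12 .
lemma B21[simp]: "Bf e2 e1 = 1" by (metis Bf_cnj complex_cnj_one e1l2 e2l2 n12)

definition inE :: "vec \<Rightarrow> bool" where
  "inE e \<longleftrightarrow> e \<in> l2 \<and> Bf e e1 = 0 \<and> Bf e e2 = 0"

definition Q :: "vec \<Rightarrow> real" where "Q e = - Re (Bf e e)"
definition R :: "vec \<Rightarrow> vec \<Rightarrow> real" where "R e f = - Re (Bf e f)"

definition comb :: "complex \<Rightarrow> complex \<Rightarrow> vec \<Rightarrow> vec" where
  "comb a b e = vadd (vadd (vscale a e1) (vscale b e2)) e"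

lemma comb_l2[intro]: "e \<in> l2 \<Longrightarrow> comb a b e \<in> l2" by (simp add: comb_def l2_add l2_scale)

lemma Bf_comb_left: assumes "e \<in> l2" "w \<in> l2"
  shows "Bf (comb a b e) w = a * Bf e1 w + b * Bf e2 w + Bf e w"
  using assms by (simp add: comb_def Bf_add_left Bf_scale_left l2_add l2_scale)

lemma Bf_comb_right: assumes "e \<in> l2" "w \<in> l2"
  shows "Bf w (comb a b e) = cnj a * Bf w e1 + cnj b * Bf w e2 + Bf w e"
  using assms by (simp add: comb_def Bf_add_right Bf_scale_right l2_add l2_scale)

lemma inE_l2: "inE e \<Longrightarrow> e \<in> l2" by (simp add: inE_def)
lemma inE_1[simp]: "inE e \<Longrightarrow> Bf e e1 = 0" by (simp add: inE_def)
lemma inE_2[simp]: "inE e \<Longrightarrow> Bf e e2 = 0" by (simp add: inE_def)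
lemma inE_1'[simp]: "inE e \<Longrightarrow> Bf e1 e = 0" by (metis Bf_cnj complex_cnj_zero e1l2 inE_def)
lemma inE_2'[simp]: "inE e \<Longrightarrow> Bf e2 e = 0" by (metis Bf_cnj complex_cnj_zero e2l2 inE_def)

lemma inE_I: "e \<in> l2 \<Longrightarrow> Bf e e1 = 0 \<Longrightarrow> Bf e e2 = 0 \<Longrightarrow> inE e"
  unfolding inE_def by blast
lemma inE_add[intro]: "inE e \<Longrightarrow> inE f \<Longrightarrow> inE (vadd e f)"
  by (rule inE_I) (simp_all add: inE_l2 Bf_add_left l2_add)
lemma inE_scale[intro]: "inE e \<Longrightarrow> inE (vscale a e)"
  by (rule inE_I) (simp_all add: inE_l2 Bf_scale_left l2_scale)
lemma inE_zero[intro]: "inE vzero" by (rule inE_I) (simp_all add: l2_zero)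

lemma Bf_comb_comb: assumes "inE e" "inE f"
  shows "Bf (comb a b e) (comb c d f) = a * cnj d + b * cnj c + Bf e f"
  using assms by (simp add: Bf_comb_left Bf_comb_right inE_l2 comb_l2)

lemma comb_unique: assumes "inE e" "inE f" "comb a b e = comb c d f"
  shows "a = c" "b = d" "e = f"
proof -
  have h: "Bf (comb a b e) e2 = Bf (comb c d f) e2" "Bf (comb a b e) e1 = Bf (comb c d f) e1"
    using assms(3) by simp_all
  have "Bf (comb a b e) e2 = a" "Bf (comb c d f) e2 = c" "Bf (comb a b e) e1 = b" "Bf (comb c d f) e1 = d"
    using assms(1,2) by (simp_all add: Bf_comb_left inE_l2)
  then show ac: "a = c" and bd: "b = d" using h by simp_all
  show "e = f" using assms(3) unfolding comb_def ac bd by (auto simp: fun_eq_iff)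
qed

definition eproj :: "vec \<Rightarrow> vec" where
  "eproj v = (\<lambda>n. v n - Bf v e2 * e1 n - Bf v e1 * e2 n)"

lemma decomp: assumes "v \<in> l2"
  shows "v = comb (Bf v e2) (Bf v e1) (eproj v)" "inE (eproj v)"
proof -
  show "v = comb (Bf v e2) (Bf v e1) (eproj v)" by (simp add: comb_def eproj_def fun_eq_iff)
  have ep: "eproj v = vadd v (vadd (vscale (- Bf v e2) e1) (vscale (- Bf v e1) e2))"
    by (simp add: eproj_def fun_eq_iff)
  have l: "eproj v \<in> l2" unfolding ep using assms by (intro l2_add l2_scale) auto
  show "inE (eproj v)" using l assms
    by (intro inE_I) (simp_all add: ep Bf_add_left Bf_scale_left l2_add l2_scale)
qed

lemma negdef: assumes "inE e" "Re (Bf e e) \<ge> 0" shows "e = vzero"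
proof -
  define x where "x = vadd e1 e2"
  have xl: "x \<in> l2" by (simp add: x_def l2_add)
  have Bxx: "Bf x x = 2" by (simp add: x_def Bf_add_left Bf_add_right l2_add)
  have x0: "x 0 \<noteq> 0"
  proof
    assume "x 0 = 0" then show False using Bf_self_le(1)[OF xl] Bxx by simp
  qed
  have el: "e \<in> l2" using assms(1) by (rule inE_l2)
  have Bex: "Bf e x = 0" "Bf x e = 0" using assms(1)
    by (simp_all add: x_def Bf_add_left Bf_add_right inE_l2)
  define \<mu> where "\<mu> = - (e 0 / x 0)"
  define y where "y = vadd e (vscale \<mu> x)"
  have yl: "y \<in> l2" by (simp add: y_def el xl l2_add l2_scale)
  have y0: "y 0 = 0" using x0 by (simp add: y_def \<mu>_def)
  have "Bf y y = Bf e e + \<mu> * cnj \<mu> * 2"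
    using el xl Bex Bxx by (simp add: y_def Bf_add_left Bf_add_right Bf_scale_left Bf_scale_right l2_scale l2_add)
  hence "Re (Bf y y) = Re (Bf e e) + 2 * (cmod \<mu>)\<^sup>2"
    by (simp add: complex_norm_square[symmetric])
  hence "Re (Bf y y) \<ge> 0" using assms(2) by simp
  hence "y = vzero" using Bf_self_zero0[OF yl y0] by simp
  hence ex: "e = vscale (-\<mu>) x" by (auto simp: y_def fun_eq_iff vzero_def eq_neg_iff_add_eq_0)
  have "Bf e e1 = - \<mu>" unfolding ex using xl by (simp add: Bf_scale_left x_def Bf_add_left)
  hence "\<mu> = 0" using assms(1) by simp
  then show ?thesis using ex by (simp add: fun_eq_iff vzero_def)
qed

lemma Q_nonneg: "inE e \<Longrightarrow> Q e \<ge> 0"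
  using negdef[of e] by (cases "e = vzero") (auto simp: Q_def)

lemma Q_zero: "inE e \<Longrightarrow> Q e = 0 \<Longrightarrow> e = vzero"
  using negdef[of e] by (auto simp: Q_def)

lemma Q_scale: assumes "inE e" shows "Q (vscale a e) = (cmod a)\<^sup>2 * Q e"
proof -
  have "Bf (vscale a e) (vscale a e) = (a * cnj a) * Bf e e"
    using assms by (simp add: Bf_scale_left Bf_scale_right inE_l2 l2_scale mult.assoc)
  also have "\<dots> = of_real ((cmod a)\<^sup>2) * Bf e e" by (simp only: complex_norm_square)
  finally show ?thesis by (simp add: Q_def)
qed

lemma R_sym: "inE e \<Longrightarrow> inE f \<Longrightarrow> R e f = R f e"
proof -
  assume a: "inE e" "inE f"
  have "Bf f e = cnj (Bf e f)" using a by (simp add: Bf_cnj inE_l2)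
  then show ?thesis by (simp add: R_def)
qed

lemma Q_add: "inE e \<Longrightarrow> inE f \<Longrightarrow> Q (vadd e f) = Q e + Q f + 2 * R e f"
proof -
  assume a: "inE e" "inE f"
  have "Bf (vadd e f) (vadd e f) = Bf e e + Bf e f + Bf f e + Bf f f"
    using a by (simp add: Bf_add_left Bf_add_right inE_l2 l2_add)
  moreover have "Bf f e = cnj (Bf e f)" using a by (simp add: Bf_cnj inE_l2)
  ultimately show ?thesis by (simp add: Q_def R_def)
qed

lemma CS_real: assumes "inE e" "inE f" shows "(R e f)\<^sup>2 \<le> Q e * Q f"
proof -
  have q: "Q (vadd e (vscale (complex_of_real t) f)) = Q e + 2 * t * R e f + t\<^sup>2 * Q f" for t
  proof -
    have "R e (vscale (complex_of_real t) f) = t * R e f"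
      using assms by (simp add: R_def Bf_scale_right inE_l2)
    then show ?thesis using assms by (simp add: Q_add Q_scale inE_scale)
  qed
  have nn: "0 \<le> Q e + 2 * t * R e f + t\<^sup>2 * Q f" for t
    using Q_nonneg[of "vadd e (vscale (complex_of_real t) f)"] assms q[of t] by auto
  show ?thesis
  proof (cases "Q f = 0")
    case True
    have "R e f = 0"
    proof (rule ccontr)
      assume r: "R e f \<noteq> 0"
      have "0 \<le> Q e + 2 * (- (Q e + 1) / (2 * R e f)) * R e f" using nn[of "- (Q e + 1) / (2 * R e f)"] True by simp
      also have "\<dots> = -1" using r by (simp add: field_simps)
      finally show False by simp
    qed
    then show ?thesis using True by simp
  next
    case False
    hence qp: "Q f > 0" using Q_nonneg[OF assms(2)] by simp
    have "0 \<le> Q e + 2 * (- R e f / Q f) * R e f + (- R e f / Q f)\<^sup>2 * Q f" using nn by blast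
    also have "\<dots> = Q e - (R e f)\<^sup>2 / Q f" using qp by (simp add: field_simps power2_eq_square)
    finally have "(R e f)\<^sup>2 / Q f \<le> Q e" by simp
    then show ?thesis using qp by (simp add: pos_divide_le_eq mult.commute)
  qed
qed

lemma CS_cmod: assumes "inE e" "inE f" shows "(cmod (Bf e f))\<^sup>2 \<le> Q e * Q f"
proof -
  define s where "s = Bf e f"
  have "Bf (vscale (- cnj s) e) f = - (cnj s * s)"
    using assms by (simp add: Bf_scale_left inE_l2 s_def)
  also have "cnj s * s = of_real ((cmod s)\<^sup>2)" by (subst complex_norm_square) (simp add: mult.commute)
  finally have "R (vscale (- cnj s) e) f = (cmod s)\<^sup>2" by (simp add: R_def del: vscale_apply)
  moreover have "Q (vscale (- cnj s) e) = (cmod s)\<^sup>2 * Q e" using assms by (simp add: Q_scale)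
  ultimately have "((cmod s)\<^sup>2)\<^sup>2 \<le> (cmod s)\<^sup>2 * Q e * Q f"
    using CS_real[of "vscale (- cnj s) e" f] assms by auto
  then show ?thesis unfolding s_def[symmetric]
    using Q_nonneg[OF assms(1)] Q_nonneg[OF assms(2)]
    by (cases "s = 0") (auto simp: power2_eq_square mult.assoc)
qed

definition N :: "vec \<Rightarrow> real" where "N e = sqrt \<bar>Q e\<bar>"

lemma N_nonneg: "N e \<ge> 0" by (simp add: N_def)
lemma N_sq: assumes "inE e" shows "(N e)\<^sup>2 = Q e"
  using Q_nonneg[OF assms] by (simp add: N_def)

lemma R_le: assumes "inE e" "inE f" shows "\<bar>R e f\<bar> \<le> N e * N f"
proof -
  have "(R e f)\<^sup>2 \<le> (N e * N f)\<^sup>2" using CS_real[OF assms] by (simp add: power_mult_distrib N_sq assms)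
  then show ?thesis using N_nonneg by (metis abs_le_square_iff abs_mult abs_of_nonneg)
qed

lemma N_add_sq: "inE e \<Longrightarrow> inE f \<Longrightarrow> (N (vadd e f))\<^sup>2 = (N e)\<^sup>2 + (N f)\<^sup>2 + 2 * R e f"
  by (simp add: N_sq Q_add inE_add)

lemma tri: assumes "inE e" "inE f" shows "N (vadd e f) \<le> N e + N f"
proof -
  have "(N (vadd e f))\<^sup>2 \<le> (N e + N f)\<^sup>2"
    using N_add_sq[OF assms] R_le[OF assms] by (simp add: power2_sum)
  then show ?thesis using N_nonneg power2_le_imp_le by (metis add_nonneg_nonneg)
qed

lemma tri_rev: assumes "inE e" "inE f" shows "N e - N f \<le> N (vadd e f)"
proof -
  have "(N e - N f)\<^sup>2 \<le> (N (vadd e f))\<^sup>2"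
    using N_add_sq[OF assms] R_le[OF assms] by (simp add: power2_diff)
  then show ?thesis using N_nonneg by (metis abs_le_square_iff abs_of_nonneg dual_order.trans abs_ge_self)
qed

lemma tri_eq: assumes "inE e" "inE f" "N (vadd e f) = N e + N f" "N e > 0"
  shows "f = vscale (complex_of_real (N f / N e)) e"
proof -
  have R: "R e f = N e * N f"
  proof -
    have "(N (vadd e f))\<^sup>2 = (N e + N f)\<^sup>2" using assms(3) by simp
    then show ?thesis using N_add_sq[OF assms(1,2)] by (simp add: power2_sum)
  qed
  define g where "g = vadd (vscale (complex_of_real (N e)) f) (vscale (complex_of_real (- N f)) e)"
  have gE: "inE g" using assms by (auto simp: g_def)
  have Rs: "R (vscale (complex_of_real a) e) (vscale (complex_of_real b) f) = a * b * R e f" for a b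
    using assms by (simp add: R_def Bf_scale_left Bf_scale_right inE_l2 l2_scale)
  have Rs2: "R (vscale (- complex_of_real a) e) (vscale (complex_of_real b) f) = - (a * b * R e f)" for a b
    using assms by (simp add: R_def Bf_scale_left Bf_scale_right inE_l2 l2_scale)
  have "Q g = (N e)\<^sup>2 * Q f + (N f)\<^sup>2 * Q e + 2 * (- N f * N e * R e f)"
    using assms unfolding g_def
    by (simp add: Q_add Q_scale inE_scale R_sym[of "vscale _ f"] Rs2)
  also have "\<dots> = 0" using R by (simp add: N_sq[symmetric] assms power2_eq_square)
  finally have "g = vzero" using Q_zero[OF gE] by simp
  hence "\<forall>n. N e * f n = N f * e n" by (auto simp: g_def fun_eq_iff)
  then show ?thesis using assms(4) by (auto simp: fun_eq_iff field_simps)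
qed

end



definition mk2 :: "complex \<Rightarrow> complex \<Rightarrow> complex^2^2" where
  "mk2 a b = (\<chi> i j. if i = 1 \<and> j = 1 then a else if i = 1 \<and> j = 2 then b
                       else if i = 2 \<and> j = 1 then cnj b else cnj a)"

lemma two_neq[simp]: "(1::2) \<noteq> 2" "(2::2) \<noteq> 1" by simp_all

lemma mk2_nth[simp]: "mk2 a b $ 1 $ 1 = a" "mk2 a b $ 1 $ 2 = b"
  "mk2 a b $ 2 $ 1 = cnj b" "mk2 a b $ 2 $ 2 = cnj a"
  by (simp_all add: mk2_def)

lemma mat_eq2: "(A::complex^2^2) = B \<longleftrightarrow>
   A$1$1 = B$1$1 \<and> A$1$2 = B$1$2 \<and> A$2$1 = B$2$1 \<and> A$2$2 = B$2$2"
  by (auto simp: vec_eq_iff forall_2)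

lemma mk2_eq_iff: "mk2 a b = mk2 c d \<longleftrightarrow> a = c \<and> b = d"
  by (auto simp: mat_eq2)

lemma mmult2: "(A::complex^2^2) ** B =
  (\<chi> i j. A$i$1 * B$1$j + A$i$2 * B$2$j)"
  by (simp add: matrix_matrix_mult_def sum_2)

lemma mk2_mult: "mk2 a b ** mk2 c d = mk2 (a * c + b * cnj d) (a * d + b * cnj c)"
  by (simp add: mat_eq2 mmult2 algebra_simps)

lemma mk2_neg: "- mk2 a b = mk2 (-a) (-b)" by (simp add: mat_eq2)

lemma mat1_mk2: "mat 1 = mk2 1 0" by (simp add: mat_eq2 mat_def)

lemma Pxi_sq: "Pxi ** Pxi = mat 1"
proof -
  have s: "complex_of_real (sqrt 2) * complex_of_real (sqrt 2) = 2"
    by (subst of_real_mult[symmetric]) simp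
  show ?thesis by (simp add: mat_eq2 mmult2 Pxi_def mat_def s)
qed

lemma matrix_inv_Pxi: "matrix_inv Pxi = Pxi"
proof -
  have ex: "\<exists>A'. Pxi ** A' = mat 1 \<and> A' ** Pxi = mat 1" using Pxi_sq by blast
  define A' where "A' = matrix_inv Pxi"
  have h: "Pxi ** A' = mat 1 \<and> A' ** Pxi = mat 1"
    unfolding A'_def matrix_inv_def by (rule someI_ex[OF ex])
  have "A' = A' ** (Pxi ** Pxi)" by (simp add: Pxi_sq)
  also have "\<dots> = Pxi" by (simp add: matrix_mul_assoc h)
  finally show ?thesis by (simp add: A'_def)
qed

definition ga :: "real \<Rightarrow> real \<Rightarrow> complex" where
  "ga l b = Complex ((l + 1/l)/2) (b/2)"
definition gb :: "real \<Rightarrow> real \<Rightarrow> complex" where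
  "gb l b = Complex ((l - 1/l)/2) (- b/2)"

lemma gmat_mk2: "gmat l b = mk2 (ga l b) (gb l b)"
proof -
  have s: "complex_of_real (sqrt 2) * complex_of_real (sqrt 2) = 2"
    by (subst of_real_mult[symmetric]) simp
  show ?thesis unfolding gmat_def matrix_inv_Pxi
    by (simp add: mat_eq2 mmult2 Pxi_def ga_def gb_def algebra_simps s complex_eq_iff)
qed

lemma gmat_mult: assumes "l \<noteq> 0" "m \<noteq> 0"
  shows "gmat l b ** gmat m c = gmat (l*m) (l*c + b/m)"
  using assms by (simp add: gmat_mk2 mk2_mult mk2_eq_iff ga_def gb_def complex_eq_iff field_simps)

lemma gmat_10: "gmat 1 0 = mat 1"
  by (simp add: gmat_mk2 mat1_mk2 ga_def gb_def complex_eq_iff mk2_eq_iff)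

lemma B2_eq: "B2 z w = z$1 * cnj (w$1) - z$2 * cnj (w$2)" by (simp add: B2_def)

lemma mvec2: "(A::complex^2^2) *v z = (\<chi> i. A$i$1 * z$1 + A$i$2 * z$2)"
  by (simp add: matrix_vector_mult_def sum_2)

lemma mk2_SU: assumes "(cmod a)\<^sup>2 - (cmod b)\<^sup>2 = 1" shows "mk2 a b \<in> SU11"
proof -
  have aa: "a * cnj a = of_real ((cmod a)\<^sup>2)" "b * cnj b = of_real ((cmod b)\<^sup>2)"
    by (rule complex_norm_square[symmetric])+
  have d: "a * cnj a - b * cnj b = 1" unfolding aa using assms
    by (metis of_real_1 of_real_diff)
  have "det (mk2 a b) = 1" using d by (simp add: det_2 mult.commute)
  moreover have "B2 (mk2 a b *v z) (mk2 a b *v w) = B2 z w" for z w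
  proof -
    have "B2 (mk2 a b *v z) (mk2 a b *v w) = (a * cnj a - b * cnj b) * (z$1 * cnj (w$1) - z$2 * cnj (w$2))"
      by (simp add: B2_eq mvec2 algebra_simps)
    then show ?thesis using d by (simp add: B2_eq)
  qed
  ultimately show ?thesis by (simp add: SU11_def)
qed

lemma gmat_SU: assumes "l \<noteq> 0" shows "gmat l b \<in> SU11"
proof -
  have "(cmod (ga l b))\<^sup>2 - (cmod (gb l b))\<^sup>2 = 1"
    using assms unfolding cmod_power2 by (simp add: ga_def gb_def field_simps power2_eq_square)
  then show ?thesis by (simp add: gmat_mk2 mk2_SU)
qed

definition Wm :: "complex^2^2" where "Wm = mk2 \<i> 0"

lemma Wm_SU: "Wm \<in> SU11" by (simp add: Wm_def mk2_SU)
lemma neg1_SU: "- mat 1 \<in> SU11" by (simp add: mat1_mk2 mk2_neg mk2_SU)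

lemma Wm_conj: assumes "l \<noteq> 0" shows "Wm ** gmat l 0 = gmat (1/l) 0 ** Wm"
  using assms by (simp add: Wm_def gmat_mk2 mk2_mult mk2_eq_iff ga_def gb_def complex_eq_iff field_simps)

lemma SU_mk2: assumes "g \<in> SU11" shows "\<exists>a b. g = mk2 a b \<and> (cmod a)\<^sup>2 - (cmod b)\<^sup>2 = 1"
proof -
  define p q r s where "p = g$1$1" "q = g$1$2" "r = g$2$1" "s = g$2$2"
  have det: "p * s - q * r = 1" using assms by (simp add: SU11_def det_2 p_q_r_s_def)
  have B: "B2 (g *v z) (g *v w) = B2 z w" for z w using assms by (simp add: SU11_def)
  define u :: "complex^2" where "u = (\<chi> i. if i = 1 then 1 else 0)"
  define v :: "complex^2" where "v = (\<chi> i. if i = 2 then 1 else 0)"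
  have gu: "g *v u = (\<chi> i. g$i$1)" "g *v v = (\<chi> i. g$i$2)" by (simp_all add: mvec2 u_def v_def)
  have e1: "p * cnj p - r * cnj r = 1" using B[of u u] unfolding gu by (simp add: B2_eq p_q_r_s_def u_def)
  have e2: "q * cnj q - s * cnj s = -1" using B[of v v] unfolding gu by (simp add: B2_eq p_q_r_s_def v_def)
  have e3: "q * cnj p - s * cnj r = 0" using B[of v u] unfolding gu by (simp add: B2_eq p_q_r_s_def u_def v_def)
  have e3': "cnj p * q = cnj r * s" using e3 by (simp add: algebra_simps)
  have sp: "s = cnj p"
  proof -
    have "s = s * (p * cnj p - r * cnj r)" using e1 by simp
    also have "\<dots> = cnj p * (p * s) - r * (cnj r * s)" by (simp add: algebra_simps)
    also have "\<dots> = cnj p * (p * s) - r * (cnj p * q)" using e3' by simp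
    also have "\<dots> = cnj p * (p * s - q * r)" by (simp add: algebra_simps)
    finally show ?thesis using det by simp
  qed
  have rq: "r = cnj q"
  proof -
    have e3c: "cnj q * p = cnj s * r" using arg_cong[OF e3, of cnj] by (simp add: algebra_simps)
    have "cnj q = cnj q * (p * s - q * r)" using det by simp
    also have "\<dots> = s * (cnj q * p) - q * cnj q * r" by (simp add: algebra_simps)
    also have "\<dots> = s * (cnj s * r) - q * cnj q * r" using e3c by simp
    also have "\<dots> = - r * (q * cnj q - s * cnj s)" by (simp add: algebra_simps)
    finally show ?thesis using e2 by simp
  qed
  have g: "g = mk2 p q" by (simp add: mat_eq2 p_q_r_s_def[symmetric] sp rq)
  have "p * cnj p - q * cnj q = 1" using e1 rq by (simp add: mult.commute)
  hence "of_real ((cmod p)\<^sup>2 - (cmod q)\<^sup>2) = (1::complex)"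
    by (simp only: of_real_diff complex_norm_square)
  hence "(cmod p)\<^sup>2 - (cmod q)\<^sup>2 = 1" using of_real_eq_1_iff by blast
  then show ?thesis using g by blast
qed

lemma bruhat: assumes "g \<in> SU11"
  shows "(\<exists>l x. l > 0 \<and> (g = gmat l x \<or> g = - gmat l x)) \<or>
         (\<exists>x l y. l > 0 \<and> (g = gmat 1 x ** Wm ** gmat l y \<or> g = - (gmat 1 x ** Wm ** gmat l y)))"
proof -
  obtain al be where g: "g = mk2 al be" and n: "(cmod al)\<^sup>2 - (cmod be)\<^sup>2 = 1"
    using SU_mk2[OF assms] by blast
  define A where "A = Re al + Re be"
  define B where "B = Im al - Im be"
  define C where "C = Im al + Im be"
  define D where "D = Re al - Re be"
  have al: "al = Complex ((A + D)/2) ((B + C)/2)" by (simp add: A_def B_def C_def D_def complex_eq_iff)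
  have be: "be = Complex ((A - D)/2) ((C - B)/2)" by (simp add: A_def B_def C_def D_def complex_eq_iff)
  have det: "A * D + B * C = 1" using n unfolding cmod_power2
    by (simp add: A_def B_def C_def D_def power2_eq_square algebra_simps)
  show ?thesis
  proof (cases "C = 0")
    case True
    hence AD: "A * D = 1" using det by simp
    hence A0: "A \<noteq> 0" by auto
    have D: "D = 1 / A" using AD A0 by (simp add: field_simps)
    show ?thesis
    proof (cases "A > 0")
      case True
      have "g = gmat A B" unfolding g gmat_mk2 mk2_eq_iff al be
        using \<open>C = 0\<close> D by (simp add: ga_def gb_def)
      then show ?thesis using True by blast
    next
      case False
      hence "- A > 0" using A0 by simp
      moreover have "g = - gmat (-A) (-B)" unfolding g gmat_mk2 mk2_neg mk2_eq_iff al be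
        using \<open>C = 0\<close> D A0 by (simp add: ga_def gb_def complex_eq_iff field_simps)
      ultimately show ?thesis by blast
    qed
  next
    case False
    have Bv: "B = (1 - A * D) / C" using det False by (simp add: field_simps)
    have prod: "gmat 1 x ** Wm ** gmat l y = mk2 ((- x/2 + \<i>) * ga l y + (- x/2) * cnj (gb l y))
                   ((- x/2 + \<i>) * gb l y + (- x/2) * cnj (ga l y))" for x l y
      by (simp add: gmat_mk2 Wm_def mk2_mult ga_def gb_def complex_eq_iff mk2_eq_iff)
    show ?thesis
    proof (cases "C > 0")
      case True
      have "g = gmat 1 (- A / C) ** Wm ** gmat C (- D)"
        unfolding g prod mk2_eq_iff al be using False
        by (simp add: ga_def gb_def complex_eq_iff Bv field_simps)
      then show ?thesis using True by blast
    next
      case F2: False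
      hence "- C > 0" using False by simp
      moreover have "g = - (gmat 1 (- A / C) ** Wm ** gmat (- C) D)"
        unfolding g prod mk2_neg mk2_eq_iff al be using False
        by (simp add: ga_def gb_def complex_eq_iff Bv field_simps)
      ultimately show ?thesis by blast
    qed
  qed
qed




lemma UB_D: assumes "T \<in> UB" shows "bij_betw T l2 l2"
  "\<forall>v\<in>l2. \<forall>w\<in>l2. T (vadd v w) = vadd (T v) (T w)"
  "\<forall>a. \<forall>v\<in>l2. T (vscale a v) = vscale a (T v)"
  "\<forall>v\<in>l2. \<forall>w\<in>l2. Bf (T v) (T w) = Bf v w"
  using assms unfolding UB_def mem_Collect_eq by blast+
lemma UB_bij: "T \<in> UB \<Longrightarrow> bij_betw T l2 l2" by (rule UB_D(1))
lemma UB_l2: "T \<in> UB \<Longrightarrow> v \<in> l2 \<Longrightarrow> T v \<in> l2"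
  by (rule bij_betw_apply[OF UB_bij])
lemma UB_add: "T \<in> UB \<Longrightarrow> v \<in> l2 \<Longrightarrow> w \<in> l2 \<Longrightarrow> T (vadd v w) = vadd (T v) (T w)"
  using UB_D(2) by blast
lemma UB_scale: "T \<in> UB \<Longrightarrow> v \<in> l2 \<Longrightarrow> T (vscale a v) = vscale a (T v)"
  using UB_D(3) by blast
lemma UB_Bf: "T \<in> UB \<Longrightarrow> v \<in> l2 \<Longrightarrow> w \<in> l2 \<Longrightarrow> Bf (T v) (T w) = Bf v w"
  using UB_D(4) by blast
lemma UB_inj: "T \<in> UB \<Longrightarrow> v \<in> l2 \<Longrightarrow> w \<in> l2 \<Longrightarrow> T v = T w \<Longrightarrow> v = w"
  using bij_betw_imp_inj_on[OF UB_bij] by (rule inj_onD)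
lemma vscale0: "vscale 0 v = vzero" by (simp add: vscale_def vzero_def)
lemma vscale1: "vscale 1 v = v" by (simp add: vscale_def)
lemma UB_zero: "T \<in> UB \<Longrightarrow> T vzero = vzero"
  using UB_scale[of T vzero 0] by (simp add: vscale0 l2_zero)
lemma UB_nz: "T \<in> UB \<Longrightarrow> v \<in> l2 \<Longrightarrow> v \<noteq> vzero \<Longrightarrow> T v \<noteq> vzero"
  using UB_inj[of T v vzero] UB_zero[of T] l2_zero by force

lemma UB_iso: "T \<in> UB \<Longrightarrow> isotropic v \<Longrightarrow> isotropic (T v)"
  unfolding isotropic_def using UB_l2[of T v] UB_Bf[of T v v] UB_nz[of T v] by simp

lemma pe_sym: assumes "proj_eq X Y" shows "proj_eq Y X"
proof -
  obtain u where u: "cmod u = 1" "\<forall>v\<in>l2. X v = vscale u (Y v)" using assms proj_eq_def by blast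
  have u0: "u \<noteq> 0" using u(1) by auto
  have "\<forall>v\<in>l2. Y v = vscale (1/u) (X v)" using u u0 by (simp add: vscale_def fun_eq_iff)
  moreover have "cmod (1/u) = 1" using u(1) by (simp add: norm_divide)
  ultimately show ?thesis unfolding proj_eq_def by blast
qed

lemma pe_trans: assumes "proj_eq X Y" "proj_eq Y Z" shows "proj_eq X Z"
proof -
  obtain u where u: "cmod u = 1" "\<forall>v\<in>l2. X v = vscale u (Y v)" using assms proj_eq_def by blast
  obtain w where w: "cmod w = 1" "\<forall>v\<in>l2. Y v = vscale w (Z v)" using assms proj_eq_def by blast
  have "\<forall>v\<in>l2. X v = vscale (u*w) (Z v)" using u w by (simp add: vscale_def fun_eq_iff)
  moreover have "cmod (u*w) = 1" using u(1) w(1) by (simp add: norm_mult)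
  ultimately show ?thesis unfolding proj_eq_def by blast
qed

lemma pe_comp_left: assumes "Z \<in> UB" "\<And>v. v \<in> l2 \<Longrightarrow> Y v \<in> l2" "proj_eq X Y"
  shows "proj_eq (Z \<circ> X) (Z \<circ> Y)"
proof -
  obtain u where u: "cmod u = 1" "\<forall>v\<in>l2. X v = vscale u (Y v)" using assms proj_eq_def by blast
  have "\<forall>v\<in>l2. Z (X v) = vscale u (Z (Y v))" using u assms(1,2) UB_scale[of Z] by simp
  then show ?thesis using u(1) unfolding proj_eq_def by auto
qed

lemma pe_comp_right: assumes "\<And>v. v \<in> l2 \<Longrightarrow> Z v \<in> l2" "proj_eq X Y"
  shows "proj_eq (X \<circ> Z) (Y \<circ> Z)"
  using assms unfolding proj_eq_def by auto

lemma pe_refl: "proj_eq X X" unfolding proj_eq_def by (intro exI[of _ 1]) (simp add: vscale1)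

lemma pe_apply: assumes "proj_eq X Y" obtains u where "cmod u = 1" "\<And>v. v \<in> l2 \<Longrightarrow> X v = vscale u (Y v)"
  using assms unfolding proj_eq_def by blast




declare vadd_apply[simp del] vscale_apply[simp del] vzero_apply[simp del]

lemma vscale_vscale: "vscale a (vscale b v) = vscale (a * b) v" by (simp add: vscale_def fun_eq_iff)

lemma key_ineq: fixes \<alpha> z :: complex assumes "\<alpha> \<noteq> 0"
  shows "cmod (\<alpha> * z + cnj z / cnj \<alpha>) \<ge> (cmod \<alpha> + 1 / cmod \<alpha>) * Re z"
proof -
  define r where "r = cmod \<alpha>"
  have r0: "r > 0" using assms by (simp add: r_def)
  have aa: "\<alpha> * cnj \<alpha> = of_real (r^2)" unfolding r_def by (rule complex_norm_square[symmetric])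
  have ca: "cnj \<alpha> = of_real (r^2) / \<alpha>" using assms unfolding aa[symmetric] by simp
  have eq: "\<alpha> * z + cnj z / cnj \<alpha> = (\<alpha> / of_real r) * (of_real r * z + cnj z / of_real r)"
    using assms r0 unfolding ca by (simp add: field_simps power2_eq_square)
  have u: "cmod (\<alpha> / of_real r) = 1" using r0 by (simp add: norm_divide r_def)
  have "cmod (\<alpha> * z + cnj z / cnj \<alpha>) = cmod (of_real r * z + cnj z / of_real r)"
    unfolding eq norm_mult u by simp
  also have "\<dots> \<ge> Re (of_real r * z + cnj z / of_real r)" by (rule complex_Re_le_cmod)
  finally have "cmod (\<alpha> * z + cnj z / cnj \<alpha>) \<ge> Re (of_real r * z + cnj z / of_real r)" .
  moreover have "Re (of_real r * z + cnj z / of_real r) = (r + 1/r) * Re z"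
    using r0 by (simp add: field_simps)
  ultimately show ?thesis by (simp add: r_def)
qed

context frame begin

lemma UB_comb: assumes "T \<in> UB" "e \<in> l2"
  shows "T (comb a b e) = vadd (vadd (vscale a (T e1)) (vscale b (T e2))) (T e)"
  using assms by (simp add: comb_def UB_add UB_scale l2_add l2_scale)

lemma Q_UB: "T \<in> UB \<Longrightarrow> e \<in> l2 \<Longrightarrow> Q (T e) = Q e"
  by (simp add: Q_def UB_Bf)

lemma diag_comb: assumes "A \<in> UB" "A e1 = vscale \<alpha> e1" "A e2 = vscale \<beta> e2" "e \<in> l2"
  shows "A (comb a b e) = comb (\<alpha> * a) (\<beta> * b) (A e)"
  using assms by (simp add: UB_comb) (simp add: comb_def vscale_vscale mult.commute)

lemma diag_E: assumes "A \<in> UB" "A e1 = vscale \<alpha> e1" "A e2 = vscale \<beta> e2" "\<alpha> * cnj \<beta> = 1" "inE e"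
  shows "inE (A e)"
proof -
  have a0: "\<alpha> \<noteq> 0" "\<beta> \<noteq> 0" using assms(4) by auto
  have el: "e \<in> l2" using assms(5) by (rule inE_l2)
  have "A (vscale (1/\<alpha>) e1) = e1" using assms a0 by (simp add: UB_scale vscale_vscale vscale1)
  moreover have "A (vscale (1/\<beta>) e2) = e2" using assms a0 by (simp add: UB_scale vscale_vscale vscale1)
  ultimately have "Bf (A e) e1 = Bf e (vscale (1/\<alpha>) e1)" "Bf (A e) e2 = Bf e (vscale (1/\<beta>) e2)"
    using UB_Bf[OF assms(1) el] by (metis e1l2 l2_scale) (metis \<open>A (vscale (1/\<beta>) e2) = e2\<close> UB_Bf[OF assms(1) el] e2l2 l2_scale)
  then show ?thesis using assms(5) el
    by (intro inE_I) (simp_all add: UB_l2[OF assms(1)] Bf_scale_right)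
qed

lemma hyp_decomp: assumes "x \<in> l2"
  obtains a b e where "x = comb a b e" "inE e"
  using decomp[OF assms] by blast

lemma disp_lower:
  assumes A: "A \<in> UB" "A e1 = vscale \<alpha> e1" "A e2 = vscale \<beta> e2" "\<alpha> * cnj \<beta> = 1"
    and x: "hyp_pt x"
  shows "hdist (A x) x \<ge> \<bar>ln (cmod \<alpha>)\<bar>"
proof -
  have a0: "\<alpha> \<noteq> 0" using A(4) by auto
  have cb: "cnj \<beta> = 1 / \<alpha>" using A(4) a0 by (simp add: field_simps mult.commute)
  have b: "\<beta> = 1 / cnj \<alpha>" using arg_cong[OF cb, of cnj] by simp
  have xl: "x \<in> l2" using x by (simp add: hyp_pt_def)
  obtain a b e where xe: "x = comb a b e" and eE: "inE e" using hyp_decomp[OF xl] by blast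
  have el: "e \<in> l2" using eE by (rule inE_l2)
  have AeE: "inE (A e)" using diag_E[OF A eE] .
  have Ax': "A (comb a b e) = comb (\<alpha> * a) (\<beta> * b) (A e)" by (rule diag_comb[OF A(1-3) el])
  define z where "z = a * cnj b"
  have Bxx: "Bf x x = z + cnj z + Bf e e" unfolding xe z_def using eE by (simp add: Bf_comb_comb mult.commute)
  have BAx: "Bf (A x) x = (\<alpha> * z + cnj z / cnj \<alpha>) + Bf (A e) e"
    unfolding xe Ax' z_def using eE AeE b by (simp add: Bf_comb_comb mult.commute)
  have BAA: "Bf (A x) (A x) = Bf x x" using UB_Bf[OF A(1) xl xl] .
  define q where "q = Re (Bf x x)"
  have q0: "q > 0" using x by (simp add: hyp_pt_def q_def)
  have qv: "q = 2 * Re z - Q e" unfolding q_def Bxx Q_def by simp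
  define r where "r = cmod \<alpha>"
  have r0: "r > 0" using a0 by (simp add: r_def)
  define c0 where "c0 = (r + 1/r) / 2"
  have c01: "c0 \<ge> 1"
  proof -
    have "0 \<le> (r - 1)\<^sup>2" by simp
    hence "2 * r \<le> r * r + 1" by (simp add: power2_eq_square algebra_simps)
    hence "2 \<le> r + 1/r" using r0 by (simp add: field_simps)
    then show ?thesis by (simp add: c0_def)
  qed
  have Qe0: "Q e \<ge> 0" using Q_nonneg[OF eE] .
  have cs: "cmod (Bf (A e) e) \<le> Q e"
  proof -
    have "(cmod (Bf (A e) e))\<^sup>2 \<le> Q (A e) * Q e" by (rule CS_cmod[OF AeE eE])
    also have "\<dots> = (Q e)\<^sup>2" using Q_UB[OF A(1) el] by (simp add: power2_eq_square)
    finally show ?thesis using Qe0 by (simp add: power2_le_iff_abs_le)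
  qed
  have k: "cmod (\<alpha> * z + cnj z / cnj \<alpha>) \<ge> 2 * c0 * Re z"
  proof -
    have "2 * c0 * Re z = (r + 1/r) * Re z" by (simp add: c0_def)
    then show ?thesis using key_ineq[OF a0, of z] unfolding r_def by linarith
  qed
  have "cmod (Bf (A x) x) \<ge> cmod (\<alpha> * z + cnj z / cnj \<alpha>) - cmod (Bf (A e) e)"
    unfolding BAx by (rule norm_diff_ineq)
  moreover have "c0 * Q e \<ge> 1 * Q e" using c01 Qe0 by (rule mult_right_mono)
  moreover have "c0 * q = c0 * (2 * Re z) - c0 * Q e" by (simp add: qv algebra_simps)
  ultimately have ge: "cmod (Bf (A x) x) \<ge> c0 * q"
    using k cs by (simp add: algebra_simps)
  have ratio: "cmod (Bf (A x) x) / sqrt (Re (Bf (A x) (A x)) * Re (Bf x x)) \<ge> c0"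
    unfolding BAA q_def[symmetric] using q0 ge by (simp add: pos_le_divide_eq)
  have hc: "c0 = cosh \<bar>ln r\<bar>" using r0 by (simp add: c0_def cosh_ln_real field_simps)
  have "\<bar>ln r\<bar> = arcosh c0" unfolding hc using arcosh_cosh_real[of "\<bar>ln r\<bar>"] by simp
  also have "\<dots> \<le> hdist (A x) x"
  proof -
    define t where "t = cmod (Bf (A x) x) / sqrt (Re (Bf (A x) (A x)) * Re (Bf x x))"
    have t1: "t \<ge> 1" using ratio c01 by (simp add: t_def)
    have "\<not> arcosh t < arcosh c0" using arcosh_less_iff_real[OF t1 c01] ratio by (simp add: t_def)
    then show ?thesis by (simp add: hdist_def t_def[symmetric])
  qed
  finally show ?thesis by (simp add: r_def)
qed

lemma disp_at:
  assumes A: "A \<in> UB" "A e1 = vscale \<alpha> e1" "A e2 = vscale \<beta> e2" "\<alpha> * cnj \<beta> = 1"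
  shows "hyp_pt (comb 1 1 vzero)" "hdist (A (comb 1 1 vzero)) (comb 1 1 vzero) = \<bar>ln (cmod \<alpha>)\<bar>"
proof -
  have a0: "\<alpha> \<noteq> 0" using A(4) by auto
  have cb: "cnj \<beta> = 1 / \<alpha>" using A(4) a0 by (simp add: field_simps mult.commute)
  have b: "\<beta> = 1 / cnj \<alpha>" using arg_cong[OF cb, of cnj] by simp
  define x where "x = comb 1 1 vzero"
  have xl: "x \<in> l2" by (simp add: x_def comb_l2 l2_zero)
  have Bxx: "Bf x x = 2" unfolding x_def by (simp add: Bf_comb_comb inE_zero)
  then show "hyp_pt (comb 1 1 vzero)" using xl by (simp add: hyp_pt_def x_def)
  have Ax: "A (comb 1 1 vzero) = comb \<alpha> \<beta> vzero" using diag_comb[OF A(1-3) l2_zero, of 1 1] UB_zero[OF A(1)] by simp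
  have BAx: "Bf (A x) x = \<alpha> * 1 + cnj 1 / cnj \<alpha>"
    unfolding x_def Ax using b by (simp add: Bf_comb_comb inE_zero)
  define r where "r = cmod \<alpha>"
  have r0: "r > 0" using a0 by (simp add: r_def)
  have "cmod (Bf (A x) x) \<ge> (r + 1/r) * Re 1" unfolding BAx r_def by (rule key_ineq[OF a0])
  moreover have "cmod (Bf (A x) x) \<le> r + 1/r"
  proof -
    have "cmod (Bf (A x) x) \<le> cmod (\<alpha> * 1) + cmod (cnj 1 / cnj \<alpha>)" unfolding BAx by (rule norm_triangle_ineq)
    also have "\<dots> = r + 1/r" by (simp add: r_def norm_divide)
    finally show ?thesis .
  qed
  ultimately have cm: "cmod (Bf (A x) x) = r + 1/r" by simp
  have BAA: "Bf (A x) (A x) = 2" using UB_Bf[OF A(1) xl xl] Bxx by simp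
  have "hdist (A x) x = arcosh ((r + 1/r) / 2)" unfolding hdist_def BAA Bxx cm by simp
  also have "(r + 1/r)/2 = cosh \<bar>ln r\<bar>" using r0 by (simp add: cosh_ln_real field_simps)
  finally show "hdist (A (comb 1 1 vzero)) (comb 1 1 vzero) = \<bar>ln (cmod \<alpha>)\<bar>"
    using arcosh_cosh_real[of "\<bar>ln r\<bar>"] by (simp add: x_def r_def)
qed

lemma disp_inf:
  assumes A: "A \<in> UB" "A e1 = vscale \<alpha> e1" "A e2 = vscale \<beta> e2" "\<alpha> * cnj \<beta> = 1"
  shows "Inf ((\<lambda>x. hdist (A x) x) ` {x. hyp_pt x}) = \<bar>ln (cmod \<alpha>)\<bar>"
proof (rule cInf_eq_minimum)
  show "\<bar>ln (cmod \<alpha>)\<bar> \<in> (\<lambda>x. hdist (A x) x) ` {x. hyp_pt x}"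
    using disp_at[OF A] by (metis (mono_tags, lifting) image_eqI mem_Collect_eq)
  show "\<And>y. y \<in> (\<lambda>x. hdist (A x) x) ` {x. hyp_pt x} \<Longrightarrow> \<bar>ln (cmod \<alpha>)\<bar> \<le> y"
    using disp_lower[OF A] by blast
qed

end



lemma vscale_cancel: assumes "v \<noteq> vzero" "vscale u v = vscale u' v" shows "u = u'"
proof -
  obtain n where "v n \<noteq> 0" using assms(1) by (auto simp: vzero_def fun_eq_iff)
  moreover have "u * v n = u' * v n" using assms(2) by (metis vscale_def)
  ultimately show ?thesis by simp
qed

lemma eps_real:
  fixes r :: "real \<Rightarrow> real"
  assumes pos: "\<And>l. l > 0 \<Longrightarrow> r l > 0"
    and mult: "\<And>l m. l > 0 \<Longrightarrow> m > 0 \<Longrightarrow> r (l * m) = r l * r m"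
    and ab: "\<And>l. l > 0 \<Longrightarrow> \<bar>ln (r l)\<bar> = 2 * \<bar>ln l\<bar>"
  shows "(\<forall>l>0. r l = l\<^sup>2) \<or> (\<forall>l>0. r l = 1 / l\<^sup>2)"
proof -
  define f where "f l = ln (r l)" for l
  have fm: "f (l * m) = f l + f m" if "l > 0" "m > 0" for l m
    using that pos[OF that(1)] pos[OF that(2)] by (simp add: f_def mult ln_mult)
  have fa: "f l = 2 * ln l \<or> f l = - 2 * ln l" if "l > 0" for l
    using ab[OF that] unfolding f_def by linarith
  have rf: "r l = exp (f l)" if "l > 0" for l using pos[OF that] by (simp add: f_def)
  have key: "f l = s * 2 * ln l" if s: "f 2 = s * 2 * ln 2" "s = 1 \<or> s = -1" and l: "l > 0" for s l
  proof (rule ccontr)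
    assume ne: "f l \<noteq> s * 2 * ln l"
    hence fl: "f l = - s * 2 * ln l" using fa[OF l] s(2) by auto
    have lnl: "ln l \<noteq> 0" using ne fl by auto
    have "f (2 * l) = s * 2 * ln 2 - s * 2 * ln l" using fm[of 2 l] l s(1) fl by simp
    hence "f (2 * l) = (s * 2) * (ln 2 - ln l)" by (simp add: algebra_simps)
    hence "\<bar>f (2 * l)\<bar> = 2 * \<bar>ln 2 - ln l\<bar>" using s(2) by (auto simp: abs_mult)
    moreover have "\<bar>f (2 * l)\<bar> = 2 * \<bar>ln 2 + ln l\<bar>"
      using ab[of "2*l"] l by (simp add: f_def ln_mult)
    ultimately have "\<bar>ln 2 - ln l\<bar> = \<bar>ln 2 + ln l\<bar>" by simp
    hence "(ln 2 - ln l)\<^sup>2 = (ln 2 + ln l)\<^sup>2" by (metis power2_abs)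
    hence "ln 2 * ln l = 0" by (simp add: power2_eq_square algebra_simps)
    then show False using lnl by simp
  qed
  have "f 2 = 1 * 2 * ln 2 \<or> f 2 = (-1) * 2 * ln 2" using fa[of 2] by simp
  then show ?thesis
  proof
    assume h: "f 2 = 1 * 2 * ln 2"
    have "r l = l\<^sup>2" if "l > 0" for l
    proof -
      have "r l = exp (2 * ln l)" using rf[OF that] key[OF h _ that] by simp
      also have "\<dots> = (exp (ln l))\<^sup>2" using exp_of_nat_mult[of 2 "ln l"] by simp
      also have "\<dots> = l\<^sup>2" using that by simp
      finally show ?thesis .
    qed
    then show ?thesis by blast
  next
    assume h: "f 2 = (-1) * 2 * ln 2"
    have "r l = 1 / l\<^sup>2" if "l > 0" for l
    proof -
      have "r l = exp (- (2 * ln l))" using rf[OF that] key[OF h _ that] by simp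
      also have "\<dots> = 1 / (exp (ln l))\<^sup>2" using exp_of_nat_mult[of 2 "ln l"] by (simp add: exp_minus field_simps)
      also have "\<dots> = 1 / l\<^sup>2" using that by simp
      finally show ?thesis .
    qed
    then show ?thesis by blast
  qed
qed

lemma SU_mult: assumes "g \<in> SU11" "h \<in> SU11" shows "g ** h \<in> SU11"
  using assms by (simp add: SU11_def det_mul matrix_vector_mul_assoc[symmetric])

lemma neg_mat1_mult: "(- mat 1) ** (M::complex^2^2) = - M"
  by (simp add: mat_eq2 mmult2 mat_def)

lemma neg_SU: "g \<in> SU11 \<Longrightarrow> - g \<in> SU11"
  using SU_mult[OF neg1_SU] neg_mat1_mult by metis

context frame begin

definition lineperm :: "(vec \<Rightarrow> vec) \<Rightarrow> bool" where
  "lineperm X \<longleftrightarrow> (same_line e1 (X e1) \<and> same_line e2 (X e2)) \<or> (same_line e2 (X e1) \<and> same_line e1 (X e2))"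

lemma lp_proj: assumes "proj_eq X W" "lineperm W" shows "lineperm X"
proof -
  obtain u where u: "\<And>v. v \<in> l2 \<Longrightarrow> X v = vscale u (W v)" using assms(1) pe_apply by blast
  have sl: "same_line a (X b)" if "same_line a (W b)" "b \<in> l2" for a b
    using that u[OF that(2)] unfolding same_line_def by (auto simp: vscale_vscale)
  have s1: "same_line a (W e1) \<Longrightarrow> same_line a (X e1)" for a using sl[of a e1] by simp
  have s2: "same_line a (W e2) \<Longrightarrow> same_line a (X e2)" for a using sl[of a e2] by simp
  show ?thesis using assms(2) s1 s2 unfolding lineperm_def by blast
qed

lemma lp_comp: assumes "Y \<in> UB" "lineperm Y" "lineperm Z" shows "lineperm (Y \<circ> Z)"
proof -
  have sl: "same_line a (Y (Z b))" if h: "same_line d (Z b)" "same_line a (Y d)" "d \<in> l2" for a b d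
  proof -
    obtain \<mu> where m: "Z b = vscale \<mu> d" using h(1) unfolding same_line_def by blast
    obtain \<nu> where n: "Y d = vscale \<nu> a" using h(2) unfolding same_line_def by blast
    have "Y (Z b) = Y (vscale \<mu> d)" by (simp only: m)
    also have "\<dots> = vscale \<mu> (Y d)" by (rule UB_scale[OF assms(1) h(3)])
    also have "\<dots> = vscale (\<mu> * \<nu>) a" by (simp only: n vscale_vscale)
    finally have "Y (Z b) = vscale (\<mu> * \<nu>) a" .
    then show ?thesis unfolding same_line_def by blast
  qed
  consider (z1) "same_line e1 (Z e1)" "same_line e2 (Z e2)" | (z2) "same_line e2 (Z e1)" "same_line e1 (Z e2)"
    using assms(3) unfolding lineperm_def by blast
  then show ?thesis
  proof cases
    case z1
    from assms(2) consider (y1) "same_line e1 (Y e1)" "same_line e2 (Y e2)" | (y2) "same_line e2 (Y e1)" "same_line e1 (Y e2)"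
      unfolding lineperm_def by blast
    then show ?thesis
    proof cases
      case y1 then show ?thesis using sl[OF z1(1) y1(1) e1l2] sl[OF z1(2) y1(2) e2l2] unfolding lineperm_def comp_def by blast
    next
      case y2 then show ?thesis using sl[OF z1(1) y2(1) e1l2] sl[OF z1(2) y2(2) e2l2] unfolding lineperm_def comp_def by blast
    qed
  next
    case z2
    from assms(2) consider (y1) "same_line e1 (Y e1)" "same_line e2 (Y e2)" | (y2) "same_line e2 (Y e1)" "same_line e1 (Y e2)"
      unfolding lineperm_def by blast
    then show ?thesis
    proof cases
      case y1 then show ?thesis using sl[OF z2(1) y1(2) e2l2] sl[OF z2(2) y1(1) e1l2] unfolding lineperm_def comp_def by blast
    next
      case y2 then show ?thesis using sl[OF z2(1) y2(2) e2l2] sl[OF z2(2) y2(1) e1l2] unfolding lineperm_def comp_def by blast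
    qed
  qed
qed

lemma eigen:
  assumes A: "A \<in> UB" "A e1 = vscale \<alpha> e1" "A e2 = vscale \<beta> e2" "\<alpha> * cnj \<beta> = 1"
    and a1: "cmod \<alpha> \<noteq> 1" and w: "isotropic w" "A w = vscale \<mu> w"
  shows "same_line e1 w \<or> same_line e2 w"
proof -
  have wl: "w \<in> l2" using w(1) by (simp add: isotropic_def)
  obtain a b e where we: "w = comb a b e" and eE: "inE e" using hyp_decomp[OF wl] by blast
  have el: "e \<in> l2" using eE by (rule inE_l2)
  have a0: "\<alpha> \<noteq> 0" using A(4) by auto
  have cb: "cnj \<beta> = 1 / \<alpha>" using A(4) a0 by (simp add: field_simps mult.commute)
  have nb: "cmod \<beta> = 1 / cmod \<alpha>" using arg_cong[OF cb, of cmod] by (simp add: norm_divide)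
  have r0: "cmod \<alpha> > 0" using a0 by simp
  have ba: "cmod \<beta> \<noteq> 1" using nb a1 r0 by (auto simp: field_simps)
  have ab: "cmod \<alpha> \<noteq> cmod \<beta>"
  proof
    assume "cmod \<alpha> = cmod \<beta>"
    hence "(cmod \<alpha>)\<^sup>2 = 1" using nb r0 by (simp add: field_simps power2_eq_square)
    hence "cmod \<alpha> = 1 \<or> cmod \<alpha> = -1" by (simp add: power2_eq_1_iff)
    then show False using a1 r0 by auto
  qed
  have sc: "vscale \<mu> (comb a b e) = comb (\<mu> * a) (\<mu> * b) (vscale \<mu> e)"
    by (simp add: comb_def vscale_def vadd_def fun_eq_iff algebra_simps)
  have "comb (\<alpha> * a) (\<beta> * b) (A e) = comb (\<mu> * a) (\<mu> * b) (vscale \<mu> e)"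
    using w(2) diag_comb[OF A(1-3) el, of a b] sc unfolding we by simp
  then have eqs: "\<alpha> * a = \<mu> * a" "\<beta> * b = \<mu> * b" "A e = vscale \<mu> e"
    using comb_unique[OF diag_E[OF A eE] inE_scale[OF eE]] by blast+
  have Qe: "Q e = (cmod \<mu>)\<^sup>2 * Q e" using Q_UB[OF A(1) el] eqs(3) Q_scale[OF eE] by simp
  have e0: "e = vzero" if "cmod \<mu> \<noteq> 1"
  proof -
    have "(cmod \<mu>)\<^sup>2 \<noteq> 1"
    proof
      assume "(cmod \<mu>)\<^sup>2 = 1"
      hence "cmod \<mu> = 1 \<or> cmod \<mu> = -1" by (simp add: power2_eq_1_iff)
      then show False using that norm_ge_zero[of \<mu>] by linarith
    qed
    hence "Q e = 0" using Qe by (metis mult_cancel_right1)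
    then show ?thesis using Q_zero[OF eE] by simp
  qed
  show ?thesis
  proof (cases "a = 0")
    case False
    hence m: "\<mu> = \<alpha>" using eqs(1) by simp
    have "b = 0" using eqs(2) m ab by auto
    moreover have "e = vzero" using e0 m a1 by simp
    ultimately have "w = vscale a e1" unfolding we by (simp add: comb_def vscale_def vadd_def vzero_def fun_eq_iff)
    then show ?thesis unfolding same_line_def by blast
  next
    case True
    show ?thesis
    proof (cases "b = 0")
      case False
      hence m: "\<mu> = \<beta>" using eqs(2) by simp
      have "e = vzero" using e0 m ba by simp
      hence "w = vscale b e2" unfolding we using True by (simp add: comb_def vscale_def vadd_def vzero_def fun_eq_iff)
      then show ?thesis unfolding same_line_def by blast
    next
      case b0: True
      have "w = e" unfolding we using True b0 by (simp add: comb_def vscale_def vadd_def fun_eq_iff)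
      hence "Re (Bf e e) \<ge> 0" using w(1) by (simp add: isotropic_def)
      hence "e = vzero" using negdef[OF eE] by simp
      then show ?thesis using \<open>w = e\<close> w(1) by (simp add: isotropic_def)
    qed
  qed
qed

end



context frame begin
lemma comb_scale: "vscale u (comb a b e) = comb (u * a) (u * b) (vscale u e)"
  by (simp add: comb_def vscale_def vadd_def fun_eq_iff algebra_simps)
end

locale mainctx = frame e1 e2 for e1 e2 +
  fixes rho :: "complex^2^2 \<Rightarrow> vec \<Rightarrow> vec" and T :: "real \<Rightarrow> vec \<Rightarrow> vec"
    and K :: "real \<Rightarrow> complex" and c :: "real \<Rightarrow> vec"
  assumes rep: "representation rho"
    and nonel: "non_elementary rho"
    and ell: "has_ell rho 2"
    and eta1b: "\<forall>l>0. \<forall>b. same_line e1 (rho (gmat l b) e1)"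
    and nsl: "\<not> same_line e1 e2"
    and eta2b: "\<forall>l>0. l \<noteq> 1 \<longrightarrow> same_line e2 (rho (gmat l 0) e2)"
    and lift: "\<forall>b. T b \<in> UB \<and> proj_eq (T b) (rho (gmat 1 b)) \<and> T b e1 = e1"
    and decompA: "\<forall>b. T b e2 = vadd (vadd (vscale (K b) e1) e2) (c b)
                    \<and> c b \<in> l2 \<and> Bf (c b) e1 = 0 \<and> Bf (c b) e2 = 0"
begin

lemma rep_D: "\<forall>g\<in>SU11. rho g \<in> UB" "\<forall>g\<in>SU11. \<forall>h\<in>SU11. proj_eq (rho (g ** h)) (rho g \<circ> rho h)"
   "proj_eq (rho (- mat 1)) id"
  using rep unfolding representation_def
  by (rule conjunct1, rule conjunct1[OF conjunct2], rule conjunct1[OF conjunct2[OF conjunct2]])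
lemma rhoUB: "g \<in> SU11 \<Longrightarrow> rho g \<in> UB" using rep_D(1) by blast
lemma rho_mult: "g \<in> SU11 \<Longrightarrow> h \<in> SU11 \<Longrightarrow> proj_eq (rho (g ** h)) (rho g \<circ> rho h)"
  using rep_D(2) by blast
lemma rho_neg1: "proj_eq (rho (- mat 1)) id" by (rule rep_D(3))
lemma rho_l2: "g \<in> SU11 \<Longrightarrow> v \<in> l2 \<Longrightarrow> rho g v \<in> l2" using rhoUB UB_l2 by blast

lemma TUB: "T b \<in> UB" using lift by blast
lemma T1: "T b e1 = e1" using lift by blast
lemma Tpe: "proj_eq (T b) (rho (gmat 1 b))" using lift by blast
lemma T_l2: "v \<in> l2 \<Longrightarrow> T b v \<in> l2" using UB_l2[OF TUB] .
lemma cE: "inE (c b)" using decompA by (intro inE_I) blast+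
lemma T2: "T b e2 = comb (K b) 1 (c b)" using decompA by (simp add: comb_def vscale1)

lemma e1nz: "e1 \<noteq> vzero" using iso1 by (simp add: isotropic_def)
lemma e2nz: "e2 \<noteq> vzero" using iso2 by (simp add: isotropic_def)

lemma gSU: "l \<noteq> 0 \<Longrightarrow> gmat l b \<in> SU11" by (rule gmat_SU)

lemma pe_exact: assumes "proj_eq X Y" "X e1 = vscale a e1" "Y e1 = vscale a e1" "a \<noteq> 0" "v \<in> l2"
  shows "X v = Y v"
proof -
  obtain u where u: "cmod u = 1" "\<And>v. v \<in> l2 \<Longrightarrow> X v = vscale u (Y v)" using assms(1) pe_apply by blast
  have "vscale a e1 = vscale (u * a) e1" using u(2)[OF e1l2] assms(2,3) by (simp add: vscale_vscale)
  hence "a = u * a" using vscale_cancel[OF e1nz] by blast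
  hence "u = 1" using assms(4) by simp
  then show ?thesis using u(2)[OF assms(5)] by (simp add: vscale1)
qed

lemma T_hom: assumes "v \<in> l2" shows "T (b1 + b2) v = T b1 (T b2 v)"
proof -
  have g: "gmat 1 b1 ** gmat 1 b2 = gmat 1 (b1 + b2)" by (simp add: gmat_mult add.commute)
  have p1: "proj_eq (T (b1+b2)) (rho (gmat 1 (b1+b2)))" by (rule Tpe)
  have p2: "proj_eq (rho (gmat 1 (b1+b2))) (rho (gmat 1 b1) \<circ> rho (gmat 1 b2))"
    using rho_mult[OF gSU gSU, of 1 1 b1 b2] g by simp
  have p3: "proj_eq (rho (gmat 1 b1) \<circ> rho (gmat 1 b2)) (T b1 \<circ> rho (gmat 1 b2))"
    by (rule pe_comp_right[OF rho_l2[OF gSU] pe_sym[OF Tpe]]) simp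
  have p4: "proj_eq (T b1 \<circ> rho (gmat 1 b2)) (T b1 \<circ> T b2)"
    by (rule pe_comp_left[OF TUB T_l2 pe_sym[OF Tpe]])
  have "proj_eq (T (b1+b2)) (T b1 \<circ> T b2)" using pe_trans[OF p1 pe_trans[OF p2 pe_trans[OF p3 p4]]] .
  then show ?thesis using pe_exact[of _ _ 1] assms by (simp add: T1 vscale1)
qed

lemma T0: assumes "v \<in> l2" shows "T 0 v = v"
proof -
  have "T 0 (T 0 v) = T 0 v" using T_hom[OF assms, of 0 0] by simp
  then show ?thesis using UB_inj[OF TUB T_l2[OF assms] assms] by blast
qed

lemma e2comb: "e2 = comb 0 1 vzero" by (simp add: comb_def vscale_def vadd_def vzero_def fun_eq_iff)

lemma K0c0: "K 0 = 0" "c 0 = vzero"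
proof -
  have "comb (K 0) 1 (c 0) = comb 0 1 vzero" using T2[of 0] T0[OF e2l2] e2comb by simp
  then show "K 0 = 0" "c 0 = vzero" using comb_unique[OF cE inE_zero] by blast+
qed

definition alpha :: "real \<Rightarrow> complex" where "alpha l = (SOME \<mu>. rho (gmat l 0) e1 = vscale \<mu> e1)"
definition beta :: "real \<Rightarrow> complex" where "beta l = (SOME \<mu>. rho (gmat l 0) e2 = vscale \<mu> e2)"

lemma alpha: assumes "l > 0" shows "rho (gmat l 0) e1 = vscale (alpha l) e1"
proof -
  have "\<exists>\<mu>. rho (gmat l 0) e1 = vscale \<mu> e1" using eta1b assms unfolding same_line_def by blast
  then show ?thesis unfolding alpha_def by (rule someI_ex)
qed

lemma beta: assumes "l > 0" "l \<noteq> 1" shows "rho (gmat l 0) e2 = vscale (beta l) e2"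
proof -
  have "\<exists>\<mu>. rho (gmat l 0) e2 = vscale \<mu> e2" using eta2b assms unfolding same_line_def by blast
  then show ?thesis unfolding beta_def by (rule someI_ex)
qed

lemma A_UB: "l > 0 \<Longrightarrow> rho (gmat l 0) \<in> UB" by (simp add: rhoUB gSU)

lemma alpha_nz: assumes "l > 0" shows "alpha l \<noteq> 0"
proof
  assume "alpha l = 0"
  hence "rho (gmat l 0) e1 = vzero" using alpha[OF assms] by (simp add: vscale0)
  then show False using UB_nz[OF A_UB[OF assms] e1l2 e1nz] by simp
qed

lemma ab1: assumes "l > 0" "l \<noteq> 1" shows "alpha l * cnj (beta l) = 1"
proof -
  have "Bf (rho (gmat l 0) e1) (rho (gmat l 0) e2) = 1" using UB_Bf[OF A_UB[OF assms(1)] e1l2 e2l2] by simp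
  then show ?thesis using alpha[OF assms(1)] beta[OF assms] by (simp add: Bf_scale_left Bf_scale_right l2_scale) (metis mult.commute)
qed

lemma alpha_ln: assumes "l > 0" "l \<noteq> 1" shows "\<bar>ln (cmod (alpha l))\<bar> = 2 * \<bar>ln l\<bar>"
proof -
  have "min_disp rho l = 2 * \<bar>ln l\<bar>" using ell assms(1) by (simp add: has_ell_def)
  moreover have "min_disp rho l = \<bar>ln (cmod (alpha l))\<bar>" unfolding min_disp_def
    by (rule disp_inf[OF A_UB[OF assms(1)] alpha[OF assms(1)] beta[OF assms] ab1[OF assms]])
  ultimately show ?thesis by simp
qed

lemma alpha_mult: assumes "l > 0" "m > 0" shows "cmod (alpha (l * m)) = cmod (alpha l) * cmod (alpha m)"
proof -
  have g: "gmat l 0 ** gmat m 0 = gmat (l * m) 0" using assms gmat_mult[of l m 0 0] by simp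
  have l0: "l \<noteq> 0" "m \<noteq> 0" using assms by auto
  have "proj_eq (rho (gmat (l*m) 0)) (rho (gmat l 0) \<circ> rho (gmat m 0))"
    using rho_mult[OF gSU[OF l0(1), of 0] gSU[OF l0(2), of 0]] unfolding g .
  then obtain u where u: "cmod u = 1" "\<forall>v\<in>l2. rho (gmat (l*m) 0) v = vscale u ((rho (gmat l 0) \<circ> rho (gmat m 0)) v)"
    unfolding proj_eq_def by blast
  have lm: "l * m > 0" using assms by simp
  have "vscale (alpha (l*m)) e1 = rho (gmat (l*m) 0) e1" using alpha[OF lm] by simp
  also have "\<dots> = vscale u (rho (gmat l 0) (rho (gmat m 0) e1))" using u(2) e1l2 by simp
  also have "\<dots> = vscale u (rho (gmat l 0) (vscale (alpha m) e1))" by (simp only: alpha[OF assms(2)])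
  also have "\<dots> = vscale u (vscale (alpha m) (rho (gmat l 0) e1))" by (simp only: UB_scale[OF A_UB[OF assms(1)] e1l2])
  also have "\<dots> = vscale (u * (alpha m * alpha l)) e1" by (simp only: alpha[OF assms(1)] vscale_vscale)
  finally have "vscale (alpha (l*m)) e1 = vscale (u * (alpha m * alpha l)) e1" .
  hence "alpha (l*m) = u * (alpha m * alpha l)" using vscale_cancel[OF e1nz] by blast
  then show ?thesis using u(1) by (simp add: norm_mult)
qed

lemma alpha1: "cmod (alpha 1) = 1"
proof -
  have "cmod (alpha 1) = cmod (alpha 1) * cmod (alpha 1)" using alpha_mult[of 1 1] by simp
  moreover have "cmod (alpha 1) \<noteq> 0" using alpha_nz[of 1] by simp
  ultimately show ?thesis by simp
qed

lemma alpha_ln_all: assumes "l > 0" shows "\<bar>ln (cmod (alpha l))\<bar> = 2 * \<bar>ln l\<bar>"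
  using alpha_ln[OF assms] alpha1 by (cases "l = 1") auto

lemma eps: "(\<forall>l>0. cmod (alpha l) = l\<^sup>2) \<or> (\<forall>l>0. cmod (alpha l) = 1 / l\<^sup>2)"
  by (rule eps_real[of "\<lambda>l. cmod (alpha l)"]) (simp_all add: alpha_nz alpha_mult alpha_ln_all)

end



context mainctx begin

lemma conjT: assumes l: "l > 0" "l \<noteq> 1" and v: "v \<in> l2"
  shows "rho (gmat l 0) (T b v) = T (l\<^sup>2 * b) (rho (gmat l 0) v)"
proof -
  have l0: "l \<noteq> 0" using l by simp
  define A where "A = rho (gmat l 0)"
  have AU: "A \<in> UB" unfolding A_def using A_UB[OF l(1)] .
  have g1: "gmat l 0 ** gmat 1 b = gmat l (l * b)" using l0 gmat_mult[of l 1 0 b] by simp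
  have g2: "gmat 1 (l\<^sup>2 * b) ** gmat l 0 = gmat l (l * b)"
    using l0 gmat_mult[of 1 l "l\<^sup>2 * b" 0] by (simp add: power2_eq_square)
  have P1: "proj_eq (rho (gmat l (l * b))) (A \<circ> rho (gmat 1 b))"
    using rho_mult[OF gSU[OF l0, of 0] gSU[of 1 b]] unfolding g1 A_def by simp
  have P2: "proj_eq (A \<circ> rho (gmat 1 b)) (A \<circ> T b)"
    by (rule pe_comp_left[OF AU T_l2 pe_sym[OF Tpe]])
  have P3: "proj_eq (rho (gmat l (l * b))) (rho (gmat 1 (l\<^sup>2 * b)) \<circ> A)"
    using rho_mult[OF gSU[of 1 "l\<^sup>2 * b"] gSU[OF l0, of 0]] unfolding g2 A_def by simp
  have P4: "proj_eq (rho (gmat 1 (l\<^sup>2 * b)) \<circ> A) (T (l\<^sup>2 * b) \<circ> A)"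
    by (rule pe_comp_right[OF UB_l2[OF AU] pe_sym[OF Tpe]])
  have P: "proj_eq (A \<circ> T b) (T (l\<^sup>2 * b) \<circ> A)"
    using pe_trans[OF pe_sym[OF P2] pe_trans[OF pe_sym[OF P1] pe_trans[OF P3 P4]]] .
  have Ae1: "A e1 = vscale (alpha l) e1" unfolding A_def by (rule alpha[OF l(1)])
  have "(A \<circ> T b) e1 = vscale (alpha l) e1" using Ae1 by (simp add: T1)
  moreover have "(T (l\<^sup>2 * b) \<circ> A) e1 = vscale (alpha l) e1"
    using Ae1 UB_scale[OF TUB e1l2] by (simp add: T1)
  ultimately have "(A \<circ> T b) v = (T (l\<^sup>2 * b) \<circ> A) v"
    by (rule pe_exact[OF P _ _ alpha_nz[OF l(1)] v])
  then show ?thesis by (simp add: A_def)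
qed

lemma scale_rel: assumes l: "l > 0" "l \<noteq> 1"
  shows "K (l\<^sup>2 * b) = of_real ((cmod (alpha l))\<^sup>2) * K b"
    "Q (c (l\<^sup>2 * b)) = (cmod (alpha l))\<^sup>2 * Q (c b)"
proof -
  define A where "A = rho (gmat l 0)"
  define \<alpha> where "\<alpha> = alpha l"
  define \<beta> where "\<beta> = beta l"
  have AU: "A \<in> UB" unfolding A_def using A_UB[OF l(1)] .
  have A1: "A e1 = vscale \<alpha> e1" unfolding A_def \<alpha>_def by (rule alpha[OF l(1)])
  have A2: "A e2 = vscale \<beta> e2" unfolding A_def \<beta>_def by (rule beta[OF l])
  have ab: "\<alpha> * cnj \<beta> = 1" unfolding \<alpha>_def \<beta>_def by (rule ab1[OF l])
  have a0: "\<alpha> \<noteq> 0" "\<beta> \<noteq> 0" using ab by auto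
  have cl: "c b \<in> l2" using cE inE_l2 by blast
  have lhs: "A (T b e2) = comb (\<alpha> * K b) (\<beta> * 1) (A (c b))"
    unfolding T2 by (rule diag_comb[OF AU A1 A2 cl])
  have rhs: "T (l\<^sup>2 * b) (A e2) = comb (\<beta> * K (l\<^sup>2 * b)) (\<beta> * 1) (vscale \<beta> (c (l\<^sup>2 * b)))"
    unfolding A2 UB_scale[OF TUB e2l2] T2 by (rule comb_scale)
  have "A (T b e2) = T (l\<^sup>2 * b) (A e2)" unfolding A_def by (rule conjT[OF l e2l2])
  hence eq: "comb (\<alpha> * K b) (\<beta> * 1) (A (c b)) = comb (\<beta> * K (l\<^sup>2 * b)) (\<beta> * 1) (vscale \<beta> (c (l\<^sup>2 * b)))"
    using lhs rhs by simp
  have u: "\<alpha> * K b = \<beta> * K (l\<^sup>2 * b)" "A (c b) = vscale \<beta> (c (l\<^sup>2 * b))"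
    using comb_unique[OF diag_E[OF AU A1 A2 ab cE] inE_scale[OF cE] eq] by blast+
  have cb: "cnj \<beta> = 1 / \<alpha>" using ab a0 by (simp add: field_simps mult.commute)
  have b: "\<beta> = 1 / cnj \<alpha>" using arg_cong[OF cb, of cnj] by simp
  have aa: "\<alpha> * cnj \<alpha> = of_real ((cmod \<alpha>)\<^sup>2)" by (rule complex_norm_square[symmetric])
  have "K (l\<^sup>2 * b) = \<alpha> * cnj \<alpha> * K b" using u(1) a0 b by (simp add: field_simps)
  then show "K (l\<^sup>2 * b) = of_real ((cmod (alpha l))\<^sup>2) * K b" using aa by (simp add: \<alpha>_def)
  have "Q (c b) = Q (A (c b))" using Q_UB[OF AU cl] by simp
  also have "\<dots> = (cmod \<beta>)\<^sup>2 * Q (c (l\<^sup>2 * b))" unfolding u(2) by (rule Q_scale[OF cE])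
  finally have "Q (c b) = (cmod \<beta>)\<^sup>2 * Q (c (l\<^sup>2 * b))" .
  moreover have "cmod \<beta> = 1 / cmod \<alpha>" unfolding b by (simp add: norm_divide)
  ultimately show "Q (c (l\<^sup>2 * b)) = (cmod (alpha l))\<^sup>2 * Q (c b)" using a0
    by (simp add: \<alpha>_def field_simps power2_eq_square)
qed

definition P :: bool where "P = (\<forall>l>0. cmod (alpha l) = l\<^sup>2)"
definition hh :: "real \<Rightarrow> real" where "hh s = (if P then s\<^sup>2 else 1 / s\<^sup>2)"

lemma hscale: assumes s: "s > 0"
  shows "K s = of_real (hh s) * K 1" "Q (c s) = hh s * Q (c 1)"
proof -
  have "K s = of_real (hh s) * K 1 \<and> Q (c s) = hh s * Q (c 1)"
  proof (cases "s = 1")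
    case True then show ?thesis by (simp add: hh_def)
  next
    case False
    define l where "l = sqrt s"
    have l: "l > 0" "l \<noteq> 1" using s False by (auto simp: l_def)
    have ls: "l\<^sup>2 = s" using s by (simp add: l_def)
    have h: "(cmod (alpha l))\<^sup>2 = hh s"
    proof (cases P)
      case True
      then show ?thesis using l ls by (simp add: P_def hh_def power2_eq_square)
    next
      case False
      hence "\<forall>l>0. cmod (alpha l) = 1 / l\<^sup>2" using eps unfolding P_def by blast
      then show ?thesis using l ls False by (simp add: hh_def power2_eq_square)
    qed
    show ?thesis using scale_rel[OF l, of 1] unfolding ls h by simp
  qed
  then show "K s = of_real (hh s) * K 1" "Q (c s) = hh s * Q (c 1)" by blast+
qed

lemma Tc: assumes e: "inE e"
  shows "\<exists>x e'. T b e = comb x 0 e' \<and> inE e' \<and> Q e' = Q e \<and> x = - Bf e' (c b)"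
proof -
  have el: "e \<in> l2" using e by (rule inE_l2)
  define w where "w = T b e"
  have wl: "w \<in> l2" unfolding w_def by (rule T_l2[OF el])
  have w1: "Bf w e1 = 0" unfolding w_def using UB_Bf[OF TUB el e1l2] e by (simp add: T1)
  define x where "x = Bf w e2"
  define e' where "e' = eproj w"
  have we: "w = comb x 0 e'" using decomp(1)[OF wl] w1 by (simp add: x_def e'_def)
  have e'E: "inE e'" unfolding e'_def by (rule decomp(2)[OF wl])
  have "Q w = Q e" unfolding w_def by (rule Q_UB[OF TUB el])
  moreover have "Q w = Q e'" unfolding we Q_def using e'E by (simp add: Bf_comb_comb)
  ultimately have Qe: "Q e' = Q e" by simp
  have "Bf w (T b e2) = 0" unfolding w_def using UB_Bf[OF TUB el e2l2] e by simp
  hence "Bf (comb x 0 e') (comb (K b) 1 (c b)) = 0" unfolding we T2 .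
  hence "x + Bf e' (c b) = 0" using e'E cE by (simp add: Bf_comb_comb)
  hence "x = - Bf e' (c b)" by (simp add: eq_neg_iff_add_eq_0)
  moreover have "T b e = comb x 0 e'" using we by (simp add: w_def)
  ultimately show ?thesis using e'E Qe by blast
qed

lemma cocycle: assumes h: "T b1 (c b2) = comb x 0 e'" "inE e'"
  shows "c (b1 + b2) = vadd (c b1) e'" "K (b1 + b2) = K b1 + K b2 + x"
proof -
  have c2: "c b2 \<in> l2" using cE inE_l2 by blast
  have "T (b1 + b2) e2 = T b1 (T b2 e2)" by (rule T_hom[OF e2l2])
  also have "\<dots> = T b1 (comb (K b2) 1 (c b2))" by (simp only: T2)
  also have "\<dots> = vadd (vadd (vscale (K b2) (T b1 e1)) (vscale 1 (T b1 e2))) (T b1 (c b2))"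
    by (rule UB_comb[OF TUB c2])
  also have "\<dots> = vadd (vadd (vscale (K b2) e1) (vscale 1 (comb (K b1) 1 (c b1)))) (comb x 0 e')"
    by (simp only: T1 T2 h(1))
  also have "\<dots> = comb (K b1 + K b2 + x) 1 (vadd (c b1) e')"
    by (simp add: comb_def vscale_def vadd_def fun_eq_iff algebra_simps)
  finally have "comb (K (b1 + b2)) 1 (c (b1 + b2)) = comb (K b1 + K b2 + x) 1 (vadd (c b1) e')"
    by (simp only: T2)
  then show "c (b1 + b2) = vadd (c b1) e'" "K (b1 + b2) = K b1 + K b2 + x"
    using comb_unique[OF cE inE_add[OF cE h(2)]] by blast+
qed

end



context mainctx begin

lemma N_eqQ: "Q a = Q b \<Longrightarrow> N a = N b" by (simp add: N_def)

lemma N_c_P: assumes "P" "s > 0" shows "N (c s) = s * N (c 1)"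
proof -
  have "Q (c s) = s\<^sup>2 * Q (c 1)" using hscale(2)[OF assms(2)] assms(1) by (simp add: hh_def)
  hence "\<bar>Q (c s)\<bar> = s\<^sup>2 * \<bar>Q (c 1)\<bar>" by (simp add: abs_mult)
  then show ?thesis using assms(2) by (simp add: N_def real_sqrt_mult)
qed

lemma N_c_nP: assumes "\<not> P" "s > 0" shows "N (c s) = N (c 1) / s"
proof -
  have "Q (c s) = Q (c 1) / s\<^sup>2" using hscale(2)[OF assms(2)] assms(1) by (simp add: hh_def)
  hence "\<bar>Q (c s)\<bar> = \<bar>Q (c 1)\<bar> / s\<^sup>2" by (simp add: abs_mult)
  then show ?thesis using assms(2) by (simp add: N_def real_sqrt_divide)
qed

lemma c_zero_all: assumes "N (c 1) = 0" "s > 0" shows "c s = vzero"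
proof -
  have "Q (c 1) = 0" using assms(1) by (simp add: N_def)
  hence "Q (c s) = 0" using hscale(2)[OF assms(2)] by simp
  then show ?thesis using Q_zero[OF cE] by blast
qed

lemma nP_zero: assumes "\<not> P" shows "N (c 1) = 0"
proof -
  define n where "n = N (c 1)"
  obtain x e' where h: "T (1/4) (c (3/4)) = comb x 0 e'" "inE e'" "Q e' = Q (c (3/4))"
    using Tc[OF cE, of "1/4" "3/4"] by blast
  have "c (1/4 + 3/4) = vadd (c (1/4)) e'" by (rule cocycle(1)[OF h(1,2)])
  hence c1: "c 1 = vadd (c (1/4)) e'" by simp
  have "N (c (1/4)) - N e' \<le> N (c 1)" unfolding c1 by (rule tri_rev[OF cE h(2)])
  moreover have "N e' = N (c (3/4))" by (rule N_eqQ[OF h(3)])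
  moreover have "N (c (1/4)) = 4 * n" "N (c (3/4)) = 4 * n / 3"
    using N_c_nP[OF assms, of "1/4"] N_c_nP[OF assms, of "3/4"] by (simp_all add: n_def)
  ultimately have "n \<le> 0" by (simp add: n_def)
  then show ?thesis using N_nonneg[of "c 1"] by (simp add: n_def)
qed

lemma add_pos: assumes "P" "N (c 1) > 0" "b1 > 0" "b2 > 0"
  shows "\<exists>x. T b1 (c b2) = comb x 0 (vscale (of_real (b2 / b1)) (c b1))"
    "c (b1 + b2) = vscale (of_real ((b1 + b2) / b1)) (c b1)"
proof -
  define n where "n = N (c 1)"
  obtain x e' where h: "T b1 (c b2) = comb x 0 e'" "inE e'" "Q e' = Q (c b2)"
    using Tc[OF cE, of b1 b2] by blast
  have cc: "c (b1 + b2) = vadd (c b1) e'" by (rule cocycle(1)[OF h(1,2)])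
  have Ne: "N e' = b2 * n" using N_eqQ[OF h(3)] N_c_P[OF assms(1,4)] by (simp add: n_def)
  have Nb1: "N (c b1) = b1 * n" using N_c_P[OF assms(1,3)] by (simp add: n_def)
  have Nsum: "N (c (b1 + b2)) = (b1 + b2) * n" using N_c_P[OF assms(1), of "b1 + b2"] assms(3,4) by (simp add: n_def)
  have "N (vadd (c b1) e') = N (c b1) + N e'" using cc Nsum Ne Nb1 by (simp add: algebra_simps)
  moreover have "N (c b1) > 0" using Nb1 assms(2,3) by (simp add: n_def)
  ultimately have e': "e' = vscale (of_real (N e' / N (c b1))) (c b1)" by (rule tri_eq[OF cE h(2)])
  have rat: "N e' / N (c b1) = b2 / b1" using Ne Nb1 assms(2,3) by (simp add: n_def)
  have e'': "e' = vscale (of_real (b2 / b1)) (c b1)"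
  proof -
    note e'
    also have "vscale (of_real (N e' / N (c b1))) (c b1) = vscale (of_real (b2 / b1)) (c b1)" by (simp only: rat)
    finally show ?thesis .
  qed
  show "\<exists>x. T b1 (c b2) = comb x 0 (vscale (of_real (b2 / b1)) (c b1))"
    by (intro exI[of _ x]) (simp only: h(1) e'')
  have "c (b1 + b2) = vadd (c b1) (vscale (of_real (b2 / b1)) (c b1))" using cc e'' by simp
  also have "\<dots> = vscale (of_real ((b1 + b2) / b1)) (c b1)"
  proof -
    have eq: "(of_real ((b1 + b2) / b1) :: complex) = 1 + of_real (b2 / b1)"
      using assms(3) by (simp add: field_simps)
    show ?thesis unfolding vscale_def vadd_def fun_eq_iff eq by (simp add: algebra_simps)
  qed
  finally show "c (b1 + b2) = vscale (of_real ((b1 + b2) / b1)) (c b1)" .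
qed

lemma pos_lin: "\<exists>v. inE v \<and> (\<forall>s>0. c s = vscale (of_real s) v) \<and> (\<forall>b>0. \<exists>x. T b v = comb x 0 v)"
proof (cases "N (c 1) = 0")
  case True
  have "c s = vscale (of_real s) vzero" if "s > 0" for s
    using c_zero_all[OF True that] by (simp add: vscale_def vzero_def)
  moreover have "T b vzero = comb 0 0 vzero" for b
    using UB_zero[OF TUB] by (simp add: comb_def vscale_def vadd_def vzero_def fun_eq_iff)
  ultimately show ?thesis using inE_zero by blast
next
  case False
  hence n0: "N (c 1) > 0" using N_nonneg[of "c 1"] by simp
  have P: "P" using nP_zero False by blast
  define v where "v = c 1"
  have lin: "c s = vscale (of_real s) v" if s: "s > 0" for s
  proof -
    consider "s = 1" | "s > 1" | "s < 1" by linarith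
    then show ?thesis
    proof cases
      case 1 then show ?thesis by (simp add: v_def vscale1)
    next
      case 2
      have "c (1 + (s - 1)) = vscale (of_real ((1 + (s - 1)) / 1)) (c 1)"
        by (rule add_pos(2)[OF P n0]) (use 2 in auto)
      then show ?thesis by (simp add: v_def)
    next
      case 3
      have "c (s + (1 - s)) = vscale (of_real ((s + (1 - s)) / s)) (c s)"
        by (rule add_pos(2)[OF P n0]) (use 3 s in auto)
      hence "c 1 = vscale (of_real (1 / s)) (c s)" by simp
      hence "vscale (of_real s) (c 1) = c s" using s by (simp add: vscale_vscale vscale1)
      then show ?thesis by (simp add: v_def)
    qed
  qed
  have Tv: "\<exists>x. T b v = comb x 0 v" if b: "b > 0" for b
  proof -
    obtain x where "T b (c 1) = comb x 0 (vscale (of_real (1 / b)) (c b))"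
      using add_pos(1)[OF P n0 b, of 1] by auto
    moreover have "vscale (of_real (1 / b)) (c b) = v" using lin[OF b] b by (simp add: vscale_vscale vscale1)
    ultimately show ?thesis by (auto simp: v_def)
  qed
  have vE: "inE v" unfolding v_def by (rule cE)
  show ?thesis using vE lin Tv by blast
qed

end



context mainctx begin

lemma all_lin: obtains v where "inE v" "\<And>b. c b = vscale (of_real b) v" "\<And>b. b > 0 \<Longrightarrow> \<exists>x. T b v = comb x 0 v"
proof -
  obtain v where vE: "inE v" and pos: "\<And>s. s > 0 \<Longrightarrow> c s = vscale (of_real s) v"
    and Tv: "\<And>b. b > 0 \<Longrightarrow> \<exists>x. T b v = comb x 0 v" using pos_lin by blast
  have vl: "v \<in> l2" using vE by (rule inE_l2)
  have lin: "c b = vscale (of_real b) v" for b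
  proof -
    consider "b > 0" | "b = 0" | "b < 0" by linarith
    then show ?thesis
    proof cases
      case 1 then show ?thesis by (rule pos)
    next
      case 2 then show ?thesis using K0c0(2) by (simp add: vscale0)
    next
      case 3
      define b' where "b' = - b"
      have b': "b' > 0" using 3 by (simp add: b'_def)
      obtain x0 where x0: "T b' v = comb x0 0 v" using Tv[OF b'] by blast
      have "T (-b') (T b' v) = v" using T_hom[OF vl, of "-b'" b'] T0[OF vl] by simp
      hence "T (-b') (comb x0 0 v) = v" by (simp only: x0)
      moreover have "T (-b') (comb x0 0 v) = vadd (vadd (vscale x0 e1) (vscale 0 (T (-b') e2))) (T (-b') v)"
        by (simp only: UB_comb[OF TUB vl] T1)
      ultimately have "\<forall>n. v n = x0 * e1 n + 0 * T (-b') e2 n + T (-b') v n"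
        by (simp add: vscale_def vadd_def fun_eq_iff)
      hence Tm: "T (-b') v = comb (-x0) 0 v"
        by (simp add: comb_def vscale_def vadd_def fun_eq_iff)
      have "T (-b') (c b') = vscale (of_real b') (T (-b') v)" using pos[OF b'] UB_scale[OF TUB vl] by simp
      also have "\<dots> = comb (of_real b' * (-x0)) 0 (vscale (of_real b') v)" unfolding Tm comb_scale by simp
      finally have h: "T (-b') (c b') = comb (of_real b' * (-x0)) 0 (vscale (of_real b') v)" .
      have "c (-b' + b') = vadd (c (-b')) (vscale (of_real b') v)"
        by (rule cocycle(1)[OF h inE_scale[OF vE]])
      hence "vzero = vadd (c (-b')) (vscale (of_real b') v)" using K0c0(2) by simp
      hence "\<forall>n. c (-b') n = - (of_real b' * v n)"
        by (simp add: vzero_def vscale_def vadd_def fun_eq_iff eq_neg_iff_add_eq_0)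
      then show ?thesis by (simp add: b'_def vscale_def fun_eq_iff)
    qed
  qed
  show ?thesis using that vE lin Tv by blast
qed

lemma Kadd: assumes b1: "b1 > 0" shows "Im (K (b1 + b2)) = Im (K b1) + Im (K b2)"
proof -
  obtain v where vE: "inE v" and lin: "\<And>b. c b = vscale (of_real b) v"
    and Tv: "\<And>b. b > 0 \<Longrightarrow> \<exists>x. T b v = comb x 0 v" using all_lin by blast
  have vl: "v \<in> l2" using vE by (rule inE_l2)
  obtain x where x: "T b1 v = comb x 0 v" using Tv[OF b1] by blast
  obtain x' e'' where h: "T b1 (c b2) = comb x' 0 e''" "inE e''" "x' = - Bf e'' (c b1)"
    using Tc[OF cE, of b1 b2] by blast
  have "T b1 (c b2) = vscale (of_real b2) (T b1 v)" unfolding lin by (rule UB_scale[OF TUB vl])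
  also have "\<dots> = comb (of_real b2 * x) 0 (vscale (of_real b2) v)" unfolding x comb_scale by simp
  finally have "comb x' 0 e'' = comb (of_real b2 * x) 0 (vscale (of_real b2) v)" using h(1) by simp
  hence e'': "e'' = vscale (of_real b2) v" using comb_unique[OF h(2) inE_scale[OF vE]] by blast
  have Kx: "K (b1 + b2) = K b1 + K b2 + x'" by (rule cocycle(2)[OF h(1,2)])
  have "x' = - (of_real b2 * of_real b1 * Bf v v)"
    unfolding h(3) e'' lin using vl by (simp add: Bf_scale_left Bf_scale_right l2_scale)
  also have "Bf v v = of_real (Re (Bf v v))" by (rule Bf_self_real[OF vl])
  finally have "Im x' = 0" by simp
  then show ?thesis using Kx by simp
qed

lemma ImK: "Im (K b) = 0"
proof -
  have "Im (K (1 + 1)) = Im (K 1) + Im (K 1)" by (rule Kadd) simp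
  moreover have "K 2 = of_real (hh 2) * K 1" by (rule hscale(1)) simp
  ultimately have "hh 2 * Im (K 1) = 2 * Im (K 1)" by simp
  moreover have "hh 2 \<noteq> 2" by (simp add: hh_def)
  ultimately have K1: "Im (K 1) = 0" by simp
  have pos: "Im (K s) = 0" if "s > 0" for s using hscale(1)[OF that] K1 by simp
  consider "b > 0" | "b = 0" | "b < 0" by linarith
  then show ?thesis
  proof cases
    case 1 then show ?thesis by (rule pos)
  next
    case 2 then show ?thesis using K0c0(1) by simp
  next
    case 3
    have "Im (K (-b + b)) = Im (K (-b)) + Im (K b)" by (rule Kadd) (use 3 in simp)
    then show ?thesis using K0c0(1) pos[of "-b"] 3 by simp
  qed
qed

end



context mainctx begin

lemma LT: assumes "\<And>b. T b e2 = e2" shows "lineperm (T b)"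
proof -
  have "same_line e1 (T b e1)" "same_line e2 (T b e2)"
    unfolding same_line_def using T1 assms vscale1 by metis+
  then show ?thesis unfolding lineperm_def by blast
qed

lemma Lg1: assumes "\<And>b. T b e2 = e2" shows "lineperm (rho (gmat 1 y))"
  by (rule lp_proj[OF pe_sym[OF Tpe] LT[OF assms]])

lemma LA: assumes "\<And>b. T b e2 = e2" "l > 0" shows "lineperm (rho (gmat l 0))"
proof (cases "l = 1")
  case True then show ?thesis using Lg1[OF assms(1)] by simp
next
  case False
  have "same_line e1 (rho (gmat l 0) e1)" "same_line e2 (rho (gmat l 0) e2)"
    unfolding same_line_def using alpha[OF assms(2)] beta[OF assms(2) False] by blast+
  then show ?thesis unfolding lineperm_def by blast
qed

lemma Lg: assumes "\<And>b. T b e2 = e2" "l > 0" shows "lineperm (rho (gmat l x))"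
proof -
  have l0: "l \<noteq> 0" using assms(2) by simp
  have g: "gmat l 0 ** gmat 1 (x / l) = gmat l x" using l0 gmat_mult[of l 1 0 "x / l"] by simp
  have "proj_eq (rho (gmat l x)) (rho (gmat l 0) \<circ> rho (gmat 1 (x / l)))"
    using rho_mult[OF gSU[OF l0, of 0] gSU[of 1 "x / l"]] unfolding g by simp
  moreover have "lineperm (rho (gmat l 0) \<circ> rho (gmat 1 (x / l)))"
    by (rule lp_comp[OF A_UB[OF assms(2)] LA[OF assms] Lg1[OF assms(1)]])
  ultimately show ?thesis by (rule lp_proj)
qed

lemma Lneg: assumes "M \<in> SU11" "lineperm (rho M)" shows "lineperm (rho (- M))"
proof -
  have "proj_eq (rho (- M)) (rho (- mat 1) \<circ> rho M)"
    using rho_mult[OF neg1_SU assms(1)] unfolding neg_mat1_mult .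
  moreover have "proj_eq (rho (- mat 1) \<circ> rho M) (id \<circ> rho M)"
    by (rule pe_comp_right[OF rho_l2[OF assms(1)] rho_neg1])
  ultimately have "proj_eq (rho (- M)) (rho M)" using pe_trans by (metis id_comp)
  then show ?thesis using assms(2) by (rule lp_proj)
qed

lemma LW: "lineperm (rho Wm)"
proof -
  define W where "W = rho Wm"
  define A2 where "A2 = rho (gmat 2 0)"
  define Ah where "Ah = rho (gmat (1/2) 0)"
  have WU: "W \<in> UB" unfolding W_def by (rule rhoUB[OF Wm_SU])
  have AhU: "Ah \<in> UB" unfolding Ah_def by (rule A_UB) simp
  have g: "Wm ** gmat 2 0 = gmat (1/2) 0 ** Wm" using Wm_conj[of 2] by simp
  have "proj_eq (rho (Wm ** gmat 2 0)) (W \<circ> A2)" unfolding W_def A2_def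
    by (rule rho_mult[OF Wm_SU gSU]) simp
  moreover have "proj_eq (rho (gmat (1/2) 0 ** Wm)) (Ah \<circ> W)" unfolding W_def Ah_def
    by (rule rho_mult[OF gSU Wm_SU]) simp
  ultimately have "proj_eq (W \<circ> A2) (Ah \<circ> W)" unfolding g using pe_trans pe_sym by blast
  then obtain u where u: "cmod u = 1" "\<forall>v\<in>l2. W (A2 v) = vscale u (Ah (W v))"
    unfolding proj_eq_def by auto
  have u0: "u \<noteq> 0" using u(1) by auto
  define p where "p = W e1"
  define q where "q = W e2"
  have A2e1: "A2 e1 = vscale (alpha 2) e1" unfolding A2_def by (rule alpha) simp
  have A2e2: "A2 e2 = vscale (beta 2) e2" unfolding A2_def by (rule beta) simp_all
  have "vscale (alpha 2) p = W (A2 e1)" by (simp only: A2e1 UB_scale[OF WU e1l2] p_def)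
  also have "\<dots> = vscale u (Ah p)" using u(2) e1l2 by (simp add: p_def)
  finally have "vscale (alpha 2) p = vscale u (Ah p)" .
  hence Ahp: "Ah p = vscale (alpha 2 / u) p" using u0 by (simp add: vscale_def fun_eq_iff field_simps)
  have "vscale (beta 2) q = W (A2 e2)" by (simp only: A2e2 UB_scale[OF WU e2l2] q_def)
  also have "\<dots> = vscale u (Ah q)" using u(2) e2l2 by (simp add: q_def)
  finally have "vscale (beta 2) q = vscale u (Ah q)" .
  hence Ahq: "Ah q = vscale (beta 2 / u) q" using u0 by (simp add: vscale_def fun_eq_iff field_simps)
  have h: "(1/2::real) > 0" "(1/2::real) \<noteq> 1" by simp_all
  have Ah1: "Ah e1 = vscale (alpha (1/2)) e1" unfolding Ah_def by (rule alpha) simp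
  have Ah2: "Ah e2 = vscale (beta (1/2)) e2" unfolding Ah_def by (rule beta[OF h])
  have abh: "alpha (1/2) * cnj (beta (1/2)) = 1" by (rule ab1[OF h])
  have ah1: "cmod (alpha (1/2)) \<noteq> 1"
  proof
    assume "cmod (alpha (1/2)) = 1"
    hence "2 * \<bar>ln (1/2::real)\<bar> = 0" using alpha_ln[OF h] by simp
    then show False by simp
  qed
  have pi: "isotropic p" unfolding p_def by (rule UB_iso[OF WU iso1])
  have qi: "isotropic q" unfolding q_def by (rule UB_iso[OF WU iso2])
  have pl: "same_line e1 p \<or> same_line e2 p" by (rule eigen[OF AhU Ah1 Ah2 abh ah1 pi Ahp])
  have ql: "same_line e1 q \<or> same_line e2 q" by (rule eigen[OF AhU Ah1 Ah2 abh ah1 qi Ahq])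
  have notboth: False if a: "a = e1 \<or> a = e2" "same_line a p" "same_line a q" for a
  proof -
    obtain s where s: "p = vscale s a" using a(2) unfolding same_line_def by blast
    obtain t where t: "q = vscale t a" using a(3) unfolding same_line_def by blast
    have s0: "s \<noteq> 0" using pi s by (auto simp: isotropic_def vscale0)
    have "W (vscale t e1) = vscale (t * s) a" using UB_scale[OF WU e1l2] s by (simp add: p_def vscale_vscale)
    moreover have "W (vscale s e2) = vscale (s * t) a" using UB_scale[OF WU e2l2] t by (simp add: q_def vscale_vscale)
    ultimately have "W (vscale t e1) = W (vscale s e2)" by (simp add: mult.commute)
    hence "vscale t e1 = vscale s e2" using UB_inj[OF WU] l2_scale e1l2 e2l2 by blast
    hence "e2 = vscale (t / s) e1" using s0 by (simp add: vscale_def fun_eq_iff field_simps)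
    then show False using nsl unfolding same_line_def by blast
  qed
  have "(same_line e1 p \<and> same_line e2 q) \<or> (same_line e2 p \<and> same_line e1 q)"
    using pl ql notboth by blast
  then show ?thesis unfolding lineperm_def W_def p_def q_def by blast
qed

lemma LSU: assumes "\<And>b. T b e2 = e2" "g \<in> SU11" shows "lineperm (rho g)"
proof -
  have pos: "lineperm (rho (gmat 1 x ** Wm ** gmat l y))" if l: "l > 0" for x l y
  proof -
    have l0: "l \<noteq> 0" using l by simp
    have M1: "gmat 1 x ** Wm \<in> SU11" by (rule SU_mult[OF gSU Wm_SU]) simp
    have "proj_eq (rho (gmat 1 x ** Wm)) (rho (gmat 1 x) \<circ> rho Wm)" by (rule rho_mult[OF gSU Wm_SU]) simp
    moreover have "lineperm (rho (gmat 1 x) \<circ> rho Wm)"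
      by (rule lp_comp[OF rhoUB[OF gSU] Lg1[OF assms(1)] LW]) simp
    ultimately have L1: "lineperm (rho (gmat 1 x ** Wm))" by (rule lp_proj)
    have "proj_eq (rho (gmat 1 x ** Wm ** gmat l y)) (rho (gmat 1 x ** Wm) \<circ> rho (gmat l y))"
      by (rule rho_mult[OF M1 gSU[OF l0]])
    moreover have "lineperm (rho (gmat 1 x ** Wm) \<circ> rho (gmat l y))"
      by (rule lp_comp[OF rhoUB[OF M1] L1 Lg[OF assms(1) l]])
    ultimately show ?thesis by (rule lp_proj)
  qed
  have M1SU: "gmat 1 x ** Wm ** gmat l y \<in> SU11" if "l > 0" for x l y
    using that by (intro SU_mult gSU Wm_SU) simp_all
  from bruhat[OF assms(2)] show ?thesis
  proof
    assume "\<exists>l x. l > 0 \<and> (g = gmat l x \<or> g = - gmat l x)"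
    then obtain l x where l: "l > 0" and g: "g = gmat l x \<or> g = - gmat l x" by blast
    have l0: "l \<noteq> 0" using l by simp
    show ?thesis using g Lg[OF assms(1) l] Lneg[OF gSU[OF l0]] by blast
  next
    assume "\<exists>x l y. l > 0 \<and> (g = gmat 1 x ** Wm ** gmat l y \<or> g = - (gmat 1 x ** Wm ** gmat l y))"
    then obtain x l y where l: "l > 0" and g: "g = gmat 1 x ** Wm ** gmat l y \<or> g = - (gmat 1 x ** Wm ** gmat l y)"
      by blast
    show ?thesis using g pos[OF l] Lneg[OF M1SU[OF l]] by blast
  qed
qed

lemma nontriv: "\<exists>b. c b \<noteq> vzero"
proof (rule ccontr)
  assume "\<not> (\<exists>b. c b \<noteq> vzero)"
  hence c0: "c b = vzero" for b by blast
  have K0: "K b = 0" for b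
  proof -
    have "Bf (T b e2) (T b e2) = 0" using UB_Bf[OF TUB e2l2 e2l2] by simp
    hence "K b + cnj (K b) = 0" unfolding T2 c0 by (simp add: Bf_comb_comb inE_zero)
    hence "Re (K b) = 0" by (simp add: complex_eq_iff)
    then show ?thesis using ImK[of b] by (simp add: complex_eq_iff)
  qed
  have Te2: "T b e2 = e2" for b using T2[of b] unfolding K0 c0 e2comb[symmetric] .
  have "\<forall>g\<in>SU11. lineperm (rho g)" using LSU[OF Te2] by blast
  then show False using nonel iso1 iso2 nsl unfolding non_elementary_def lineperm_def by blast
qed

lemma main_concl:
  shows "(\<forall>b1 b2. c (b1 + b2) = vadd (c b1) (c b2))
       \<and> (\<forall>r b. c (r * b) = vscale (complex_of_real r) (c b))
       \<and> (\<exists>b. c b \<noteq> vzero)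
       \<and> (\<forall>b. Im (K b) = 0)"
proof -
  obtain v where lin: "\<And>b. c b = vscale (of_real b) v" using all_lin by blast
  have "\<forall>b1 b2. c (b1 + b2) = vadd (c b1) (c b2)"
    unfolding lin by (simp add: vscale_def vadd_def fun_eq_iff algebra_simps)
  moreover have "\<forall>r b. c (r * b) = vscale (complex_of_real r) (c b)"
    unfolding lin by (simp add: vscale_def fun_eq_iff)
  ultimately show ?thesis using nontriv ImK by blast
qed

end

theorem mainTheorem10:
  fixes rho :: "complex^2^2 \<Rightarrow> vec \<Rightarrow> vec"
    and \<eta>1 \<eta>2 :: vec
    and T :: "real \<Rightarrow> vec \<Rightarrow> vec"
    and K :: "real \<Rightarrow> complex"
    and c :: "real \<Rightarrow> vec"
  assumes rep: "representation rho"
    and nonel: "non_elementary rho"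
    and ell: "has_ell rho 2"
    and eta1: "isotropic \<eta>1"
      "\<forall>l>0. \<forall>b. same_line \<eta>1 (rho (gmat l b) \<eta>1)"
    and eta2: "isotropic \<eta>2" "\<not> same_line \<eta>1 \<eta>2"
      "\<forall>l>0. l \<noteq> 1 \<longrightarrow> same_line \<eta>2 (rho (gmat l 0) \<eta>2)"
    and norm: "Bf \<eta>1 \<eta>2 = 1"
    and lift: "\<forall>b. T b \<in> UB \<and> proj_eq (T b) (rho (gmat 1 b)) \<and> T b \<eta>1 = \<eta>1"
    and decomp: "\<forall>b. T b \<eta>2 = vadd (vadd (vscale (K b) \<eta>1) \<eta>2) (c b)
                    \<and> c b \<in> l2 \<and> Bf (c b) \<eta>1 = 0 \<and> Bf (c b) \<eta>2 = 0"
  shows "(\<forall>b1 b2. c (b1 + b2) = vadd (c b1) (c b2))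
       \<and> (\<forall>r b. c (r * b) = vscale (complex_of_real r) (c b))
       \<and> (\<exists>b. c b \<noteq> vzero)
       \<and> (\<forall>b. Im (K b) = 0)"
proof -
  interpret mainctx \<eta>1 \<eta>2 rho T K c
    by unfold_locales (fact assms)+
  show ?thesis by (rule main_concl)
qed

end
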